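(* Let $a\ge1$ and $d\ge1$ be integers, and put $w=(a,d)$, $\alpha=a/w$, $\delta=d/w$. Then $$\rho(a,d)=\frac{1}{\varphi(\delta)\,w\,\varphi(w)}\prod_{\substack{p\mid\delta\\ p\nmid w}}\Bigl(1-\frac{1}{p(p-1)}\Bigr)\prod_{\substack{p\mid\delta\\ p\mid w}}\Bigl(1-\frac1{p^2}\Bigr)\sum_{\chi \bmod \delta}\overline{\chi(\alpha)}\,A_\chi\prod_{\substack{p\mid w\\ p\nmid\delta}}\frac{1+\frac{\chi(p)-1}{p^2-\chi(p)}}{1+\frac{(\chi(p)-1)p}{(p^2-\chi(p))(p-1)}},$$ where $\chi$ runs over the Dirichlet characters modulo $\delta$. In particular, if $(a,d)=1$, then $$\rho(a,d)=\frac{1}{\varphi(d)}\prod_{p\mid d}\Bigl(1-\frac1{p(p-1)}\Bigr)\sum_{\chi\bmod d}\overline{\chi(a)}\,A_\chi.$$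
   Context: $p$ always denotes a prime, $\varphi$ Euler's totient. For integers $a$ and $d\ge1$, $\rho(a,d)=A\sum_{t\ge1,\ t\equiv a\pmod d}r(t)$, where $A=\prod_p\bigl(1-\frac{1}{p(p-1)}\bigr)$ and $r(t)=\frac{1}{t^2}\prod_{p\mid t}\frac{p^2-1}{p^2-p-1}$. For a Dirichlet character $\chi$, $A_\chi=\prod_{p:\ \chi(p)\neq0}\Bigl(1+\frac{(\chi(p)-1)p}{(p^2-\chi(p))(p-1)}\Bigr)$. *)

theory Defs
  imports "HOL-Analysis.Analysis" "HOL-Number_Theory.Number_Theory"
begin

text \<open>Dirichlet characters modulo d, viewed as functions on the naturals:
  completely multiplicative, d-periodic, and vanishing exactly on the integers
  not coprime to d.  (These force chi 1 = 1.)\<close>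
definition dirichlet_char :: "nat \<Rightarrow> (nat \<Rightarrow> complex) \<Rightarrow> bool" where
  "dirichlet_char d chi \<longleftrightarrow>
     (\<forall>m n. chi (m * n) = chi m * chi n) \<and>
     (\<forall>n. chi (n + d) = chi n) \<and>
     (\<forall>n. chi n = 0 \<longleftrightarrow> \<not> coprime n d)"

definition A_const :: real where
  "A_const = (\<Prod>p. if prime p then 1 - 1 / (real p * (real p - 1)) else 1)"

definition r_fun :: "nat \<Rightarrow> real" where
  "r_fun t = 1 / (real t)^2 *
     (\<Prod>p\<in>prime_factors t. ((real p)^2 - 1) / ((real p)^2 - real p - 1))"

definition rho :: "nat \<Rightarrow> nat \<Rightarrow> real" where
  "rho a d = A_const * infsum r_fun {t. t \<ge> 1 \<and> [t = a] (mod d)}"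

definition A_chi :: "(nat \<Rightarrow> complex) \<Rightarrow> complex" where
  "A_chi chi = (\<Prod>p. if prime p \<and> chi p \<noteq> 0 then
       1 + ((chi p - 1) * of_nat p) / ((of_nat p ^ 2 - chi p) * (of_nat p - 1))
     else 1)"

end

theory Submission
  imports Defs
begin


definition units_mod :: "nat \<Rightarrow> nat set" where
  "units_mod d = {x. x < d \<and> coprime x d}"

definition subgrp :: "nat \<Rightarrow> nat set \<Rightarrow> bool" where
  "subgrp d H \<longleftrightarrow> H \<subseteq> units_mod d \<and> 1 mod d \<in> H \<and> (\<forall>x\<in>H. \<forall>y\<in>H. x * y mod d \<in> H)"

definition pchar :: "nat \<Rightarrow> nat set \<Rightarrow> (nat \<Rightarrow> complex) \<Rightarrow> bool" where
  "pchar d H psi \<longleftrightarrow> (\<forall>x\<in>H. psi x \<noteq> 0) \<and> (\<forall>x\<in>H. \<forall>y\<in>H. psi (x * y mod d) = psi x * psi y)"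

lemma finite_units_mod: "finite (units_mod d)"
  unfolding units_mod_def by auto

lemma subgrp_pow:
  assumes "subgrp d H" "x \<in> H"
  shows "x ^ k mod d \<in> H"
proof (induction k)
  case 0
  then show ?case using assms by (simp add: subgrp_def)
next
  case (Suc k)
  have "x * (x ^ k mod d) mod d \<in> H" using assms Suc by (simp add: subgrp_def)
  then show ?case by (simp add: mod_mult_right_eq)
qed

lemma subgrp_lt: "subgrp d H \<Longrightarrow> x \<in> H \<Longrightarrow> x < d"
  by (auto simp: subgrp_def units_mod_def)

lemma subgrp_coprime: "subgrp d H \<Longrightarrow> x \<in> H \<Longrightarrow> coprime x d"
  by (auto simp: subgrp_def units_mod_def)

lemma subgrp_inv:
  assumes "subgrp d H" "x \<in> H" "d \<ge> 1"
  shows "\<exists>y\<in>H. x * y mod d = 1 mod d"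
proof -
  have cop: "coprime x d" using assms subgrp_coprime by blast
  have t: "totient d > 0" using assms by simp
  have "x ^ (totient d - 1) mod d \<in> H" using subgrp_pow assms by blast
  moreover have "x * (x ^ (totient d - 1) mod d) mod d = 1 mod d"
  proof -
    have e: "x * x ^ (totient d - 1) = x ^ totient d" using t
      by (cases "totient d") auto
    have "x * (x ^ (totient d - 1) mod d) mod d = x * x ^ (totient d - 1) mod d"
      by (rule mod_mult_right_eq)
    also have "\<dots> = x ^ totient d mod d" using e by simp
    also have "\<dots> = 1 mod d" using euler_theorem[OF cop] unfolding cong_def .
    finally show ?thesis .
  qed
  ultimately show ?thesis by blast
qed

lemma pchar_one:
  assumes "subgrp d H" "pchar d H psi"
  shows "psi (1 mod d) = 1"
proof -
  have h: "1 mod d \<in> H" using assms by (simp add: subgrp_def)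
  have "psi ((1 mod d) * (1 mod d) mod d) = psi (1 mod d) * psi (1 mod d)"
    using assms h by (simp add: pchar_def)
  moreover have "(1 mod d) * (1 mod d) mod d = 1 mod d" by (simp only: mod_mult_eq mult_1)
  ultimately have "psi (1 mod d) = psi (1 mod d) * psi (1 mod d)" by simp
  moreover have "psi (1 mod d) \<noteq> 0" using assms h by (simp add: pchar_def)
  ultimately show ?thesis by simp
qed

lemma pchar_pow:
  assumes "subgrp d H" "pchar d H psi" "x \<in> H"
  shows "psi (x ^ k mod d) = psi x ^ k"
proof (induction k)
  case 0
  then show ?case using pchar_one[OF assms(1,2)] by simp
next
  case (Suc k)
  have "psi (x * (x ^ k mod d) mod d) = psi x * psi (x ^ k mod d)"
    using assms subgrp_pow[OF assms(1,3)] by (simp add: pchar_def)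
  then show ?case using Suc by (simp add: mod_mult_right_eq)
qed

lemma cong_mod_selfI: "y = a mod d \<Longrightarrow> [y = a] (mod d)"
  by (simp add: cong_def)

lemma extend_step:
  assumes d1: "d \<ge> 1" and H: "subgrp d H" and psi: "pchar d H psi"
    and x: "x \<in> units_mod d" "x \<notin> H"
    and mdef: "m = (LEAST k. k > 0 \<and> x ^ k mod d \<in> H)"
    and z: "z ^ m = psi (x ^ m mod d)"
  shows "\<exists>H' psi'. subgrp d H' \<and> pchar d H' psi' \<and> H \<subseteq> H' \<and> x \<in> H' \<and>
           (\<forall>h\<in>H. psi' h = psi h) \<and> psi' x = z"
proof -
  have xc: "coprime x d" and xl: "x < d" using x by (auto simp: units_mod_def)
  have t: "totient d > 0" using d1 by simp
  have "x ^ totient d mod d = 1 mod d" using euler_theorem[OF xc] by (simp add: cong_def)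
  hence ex: "totient d > 0 \<and> x ^ totient d mod d \<in> H" using t H by (simp add: subgrp_def)
  have m: "m > 0 \<and> x ^ m mod d \<in> H" unfolding mdef by (rule LeastI[where P="\<lambda>k. k > 0 \<and> x ^ k mod d \<in> H", OF ex])
  have mmin: "x ^ k mod d \<notin> H" if "0 < k" "k < m" for k
  proof
    assume "x ^ k mod d \<in> H"
    hence "m \<le> k" unfolding mdef using that(1) by (intro Least_le) simp
    thus False using that(2) by simp
  qed
  have m2: "m \<ge> 2"
  proof (rule ccontr)
    assume "\<not> m \<ge> 2" then have "m = 1" using m by auto
    then show False using m x xl by simp
  qed
  have xpc: "coprime (x ^ k) d" for k using xc by simp
  have uniq: "h1 = h2 \<and> k1 = k2" if "h1 \<in> H" "h2 \<in> H" "k1 < m" "k2 < m"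
      "h1 * x ^ k1 mod d = h2 * x ^ k2 mod d" "k2 \<le> k1" for h1 h2 k1 k2
  proof -
    note hyp = that
    define j where "j = k1 - k2"
    have "k1 = j + k2" using hyp(6) j_def by simp
    hence eq: "h1 * x ^ k1 = h1 * x ^ j * x ^ k2" by (simp add: power_add mult.assoc)
    have "[h1 * x ^ j * x ^ k2 = h2 * x ^ k2] (mod d)"
      by (simp only: cong_def eq[symmetric] hyp(5))
    hence c1: "[h1 * x ^ j = h2] (mod d)" using cong_mult_rcancel_nat[OF xpc] by blast
    obtain h1' where h1': "h1' \<in> H" "h1 * h1' mod d = 1 mod d"
      using subgrp_inv[OF H hyp(1) d1] by blast
    have "[h1' * (h1 * x ^ j) = h1' * h2] (mod d)" using c1 by (rule cong_scalar_left)
    moreover have "[h1' * (h1 * x ^ j) = x ^ j] (mod d)"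
    proof -
      have "[h1 * h1' = 1] (mod d)" using h1' by (simp add: cong_def)
      hence "[h1 * h1' * x ^ j = 1 * x ^ j] (mod d)" by (rule cong_scalar_right)
      thus ?thesis by (simp add: mult_ac)
    qed
    ultimately have "[x ^ j = h1' * h2] (mod d)" by (meson cong_sym cong_trans)
    hence "x ^ j mod d = h1' * h2 mod d" by (simp add: cong_def)
    moreover have "h1' * h2 mod d \<in> H" using H h1' hyp(2) by (simp add: subgrp_def)
    ultimately have jH: "x ^ j mod d \<in> H" by simp
    have "j = 0"
    proof (rule ccontr)
      assume "j \<noteq> 0"
      hence "x ^ j mod d \<notin> H" using mmin[of j] hyp(3) j_def by simp
      thus False using jH by simp
    qed
    hence "k1 = k2" using j_def hyp(6) by simp
    moreover have "h1 = h2"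
    proof -
      have "h1 mod d = h2 mod d" using c1 \<open>j = 0\<close> by (simp add: cong_def)
      thus ?thesis using subgrp_lt[OF H hyp(1)] subgrp_lt[OF H hyp(2)] by simp
    qed
    ultimately show ?thesis by simp
  qed
  have uniq2: "h1 = h2 \<and> k1 = k2" if "h1 \<in> H" "h2 \<in> H" "k1 < m" "k2 < m"
      "h1 * x ^ k1 mod d = h2 * x ^ k2 mod d" for h1 h2 k1 k2
  proof (cases "k2 \<le> k1")
    case True
    then show ?thesis using uniq[of h1 h2 k1 k2] that by blast
  next
    case False
    then show ?thesis using uniq[of h2 h1 k2 k1] that by auto
  qed
  define H' where "H' = {y. \<exists>h\<in>H. \<exists>k<m. y = h * x ^ k mod d}"
  define rep where "rep y = (SOME hk. fst hk \<in> H \<and> snd hk < m \<and> y = fst hk * x ^ snd hk mod d)" for y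
  define psi' where "psi' y = psi (fst (rep y)) * z ^ snd (rep y)" for y
  have psi'_eq: "psi' (h * x ^ k mod d) = psi h * z ^ k" if "h \<in> H" "k < m" for h k
  proof -
    let ?P = "\<lambda>hk. fst hk \<in> H \<and> snd hk < m \<and> h * x ^ k mod d = fst hk * x ^ snd hk mod d"
    have "?P (h, k)" using that by simp
    hence P: "?P (rep (h * x ^ k mod d))" unfolding rep_def by (rule someI)
    obtain h' k' where r: "rep (h * x ^ k mod d) = (h', k')" by (cases "rep (h * x ^ k mod d)")
    have "h = h' \<and> k = k'" using uniq2[of h h' k k'] that P r by simp
    thus ?thesis unfolding psi'_def using r by simp
  qed
  have z0: "z \<noteq> 0"
  proof
    assume "z = 0"
    hence "psi (x ^ m mod d) = 0" using z m by (simp add: power_0_left)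
    thus False using psi m by (simp add: pchar_def)
  qed
  have one: "1 mod d \<in> H" using H by (simp add: subgrp_def)
  have H'sub: "H' \<subseteq> units_mod d"
  proof
    fix y assume "y \<in> H'"
    then obtain h k where hk: "h \<in> H" "y = h * x ^ k mod d" unfolding H'_def by blast
    have "coprime (h * x ^ k) d" using subgrp_coprime[OF H hk(1)] xc by simp
    thus "y \<in> units_mod d" using hk d1 by (simp add: units_mod_def coprime_mod_left_iff)
  qed
  have HH': "H \<subseteq> H'"
  proof
    fix h assume h: "h \<in> H"
    have "h = h * x ^ 0 mod d" using subgrp_lt[OF H h] by simp
    thus "h \<in> H'" unfolding H'_def using h m by blast
  qed
  have xrep: "(1 mod d) * x ^ 1 mod d = x" using xl by (simp add: mod_mult_left_eq)
  have xH': "x \<in> H'"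
  proof -
    have "1 < m" using m2 by simp
    thus ?thesis unfolding H'_def using one xrep[symmetric] by blast
  qed
  have mult: "y1 * y2 mod d \<in> H' \<and> psi' (y1 * y2 mod d) = psi' y1 * psi' y2"
    if "y1 \<in> H'" "y2 \<in> H'" for y1 y2
  proof -
    obtain h1 k1 where a: "h1 \<in> H" "k1 < m" "y1 = h1 * x ^ k1 mod d"
      using \<open>y1 \<in> H'\<close> unfolding H'_def by blast
    obtain h2 k2 where b: "h2 \<in> H" "k2 < m" "y2 = h2 * x ^ k2 mod d"
      using \<open>y2 \<in> H'\<close> unfolding H'_def by blast
    have "[y1 * y2 = (h1 * x ^ k1) * (h2 * x ^ k2)] (mod d)"
      using cong_mult[OF cong_mod_selfI[OF a(3)] cong_mod_selfI[OF b(3)]] .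
    moreover have "(h1 * x ^ k1) * (h2 * x ^ k2) = h1 * h2 * x ^ (k1 + k2)"
      by (simp add: power_add mult_ac)
    ultimately have e0: "[y1 * y2 = h1 * h2 * x ^ (k1 + k2)] (mod d)" by simp
    have p1: "psi' y1 = psi h1 * z ^ k1" using psi'_eq a by simp
    have p2: "psi' y2 = psi h2 * z ^ k2" using psi'_eq b by simp
    show ?thesis
    proof (cases "k1 + k2 < m")
      case True
      define h3 where "h3 = h1 * h2 mod d"
      have h3: "h3 \<in> H" using H a b by (simp add: subgrp_def h3_def)
      have "[h1 * h2 * x ^ (k1 + k2) = h3 * x ^ (k1 + k2)] (mod d)"
        unfolding h3_def by (simp add: cong_def mod_mult_left_eq)
      hence "[y1 * y2 = h3 * x ^ (k1 + k2)] (mod d)" using e0 cong_trans by blast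
      hence e: "y1 * y2 mod d = h3 * x ^ (k1 + k2) mod d" by (simp add: cong_def)
      have "psi h3 = psi h1 * psi h2" using psi a b by (simp add: pchar_def h3_def)
      hence "psi' (y1 * y2 mod d) = psi h1 * psi h2 * z ^ (k1 + k2)"
        using e psi'_eq[OF h3 True] by simp
      also have "\<dots> = psi' y1 * psi' y2" using p1 p2 by (simp add: power_add mult_ac)
      finally show ?thesis using e h3 True unfolding H'_def by blast
    next
      case False
      define k3 where "k3 = k1 + k2 - m"
      have k3: "k3 < m" "k1 + k2 = m + k3" using False a b by (auto simp: k3_def)
      define h3 where "h3 = (h1 * h2 mod d) * (x ^ m mod d) mod d"
      have h12: "h1 * h2 mod d \<in> H" using H a b by (simp add: subgrp_def)
      have h3: "h3 \<in> H" using H h12 m by (simp add: subgrp_def h3_def)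
      have "[h1 * h2 * x ^ (k1 + k2) = h3 * x ^ k3] (mod d)"
      proof -
        have "[h3 = h1 * h2 * x ^ m] (mod d)" unfolding h3_def
          by (simp add: cong_def mod_mult_eq)
        hence "[h3 * x ^ k3 = h1 * h2 * x ^ m * x ^ k3] (mod d)" by (rule cong_scalar_right)
        moreover have "h1 * h2 * x ^ m * x ^ k3 = h1 * h2 * x ^ (k1 + k2)"
          using k3 by (simp add: power_add mult_ac)
        ultimately show ?thesis by (simp add: cong_sym)
      qed
      hence "[y1 * y2 = h3 * x ^ k3] (mod d)" using e0 cong_trans by blast
      hence e: "y1 * y2 mod d = h3 * x ^ k3 mod d" by (simp add: cong_def)
      have "psi h3 = psi h1 * psi h2 * psi (x ^ m mod d)"
        using psi a b h12 m by (simp add: pchar_def h3_def)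
      hence "psi h3 = psi h1 * psi h2 * z ^ m" using z by simp
      hence "psi' (y1 * y2 mod d) = psi h1 * psi h2 * z ^ m * z ^ k3"
        using e psi'_eq[OF h3 k3(1)] by simp
      also have "\<dots> = psi' y1 * psi' y2"
      proof -
        have "z ^ k1 * z ^ k2 = z ^ m * z ^ k3" by (metis power_add k3(2))
        thus ?thesis using p1 p2 by (simp add: mult_ac)
      qed
      finally show ?thesis using e h3 k3 unfolding H'_def by blast
    qed
  qed
  have sg: "subgrp d H'" unfolding subgrp_def using H'sub HH' one mult by blast
  have nz: "psi' y \<noteq> 0" if "y \<in> H'" for y
  proof -
    obtain h k where a: "h \<in> H" "k < m" "y = h * x ^ k mod d"
      using \<open>y \<in> H'\<close> unfolding H'_def by blast
    thus ?thesis using psi'_eq[OF a(1,2)] psi z0 by (simp add: pchar_def)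
  qed
  have pc: "pchar d H' psi'" unfolding pchar_def using nz mult by blast
  have ext: "\<forall>h\<in>H. psi' h = psi h"
  proof
    fix h assume h: "h \<in> H"
    have "h = h * x ^ 0 mod d" using subgrp_lt[OF H h] by simp
    thus "psi' h = psi h" using psi'_eq[OF h] m by (metis mult_1_right power_0)
  qed
  have "psi' x = z" using psi'_eq[OF one, of 1] m2 xrep pchar_one[OF H psi] by simp
  thus ?thesis using sg pc HH' xH' ext by blast
qed

lemma least_props:
  assumes d1: "d \<ge> 1" and H: "subgrp d H" and x: "x \<in> units_mod d"
  shows "(LEAST k. k > 0 \<and> x ^ k mod d \<in> H) > 0 \<and> x ^ (LEAST k. k > 0 \<and> x ^ k mod d \<in> H) mod d \<in> H"
proof -
  have xc: "coprime x d" using x by (auto simp: units_mod_def)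
  have t: "totient d > 0" using d1 by simp
  have "x ^ totient d mod d = 1 mod d" using euler_theorem[OF xc] by (simp add: cong_def)
  hence ex: "totient d > 0 \<and> x ^ totient d mod d \<in> H" using t H by (simp add: subgrp_def)
  show ?thesis by (rule LeastI[where P="\<lambda>k. k > 0 \<and> x ^ k mod d \<in> H", OF ex])
qed

lemma ex_root_complex:
  fixes c :: complex
  assumes "c \<noteq> 0" "m > 0"
  shows "\<exists>z. z ^ m = c"
proof -
  have "exp (Ln c / of_nat m) ^ m = exp (of_nat m * (Ln c / of_nat m))"
    by (rule exp_of_nat_mult[symmetric])
  also have "\<dots> = exp (Ln c)" using assms by simp
  also have "\<dots> = c" using assms by simp
  finally show ?thesis by blast
qed

lemma extend_full:
  assumes "d \<ge> 1" "subgrp d H" "pchar d H psi"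
  shows "\<exists>psi'. pchar d (units_mod d) psi' \<and> (\<forall>h\<in>H. psi' h = psi h)"
  using assms
proof (induction "card (units_mod d - H)" arbitrary: H psi rule: less_induct)
  case less
  show ?case
  proof (cases "H = units_mod d")
    case True
    then show ?thesis using less.prems by blast
  next
    case False
    then obtain x where x: "x \<in> units_mod d" "x \<notin> H" using less.prems(2) by (auto simp: subgrp_def)
    define m where "m = (LEAST k. k > 0 \<and> x ^ k mod d \<in> H)"
    have mp: "m > 0" "x ^ m mod d \<in> H" using least_props[OF less.prems(1,2) x(1)] m_def by auto
    have "psi (x ^ m mod d) \<noteq> 0" using less.prems(3) mp by (simp add: pchar_def)
    then obtain z where z: "z ^ m = psi (x ^ m mod d)" using ex_root_complex mp by metis
    obtain H' psi' where H': "subgrp d H'" "pchar d H' psi'" "H \<subseteq> H'" "x \<in> H'"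
      "\<forall>h\<in>H. psi' h = psi h"
      using extend_step[OF less.prems(1,2,3) x m_def z] by blast
    have sub: "units_mod d - H' \<subset> units_mod d - H" using H' x by blast
    have "card (units_mod d - H') < card (units_mod d - H)"
      by (rule psubset_card_mono[OF _ sub]) (simp add: finite_units_mod)
    then obtain psi'' where "pchar d (units_mod d) psi''" "\<forall>h\<in>H'. psi'' h = psi' h"
      using less.hyps[OF _ less.prems(1) H'(1,2)] by blast
    hence "pchar d (units_mod d) psi'' \<and> (\<forall>h\<in>H. psi'' h = psi h)" using H'(3,5) by auto
    thus ?thesis by blast
  qed
qed

lemma cis_ne_1:
  assumes "m \<ge> (2::nat)"
  shows "cis (2 * pi / real m) \<noteq> 1"
proof
  assume "cis (2 * pi / real m) = 1"
  hence "cos (2 * pi / real m) = 1" by (metis Re_complex_of_real cis.sel(1) of_real_1)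
  then obtain n :: int where n: "2 * pi / real m = real_of_int n * 2 * pi"
    using cos_one_2pi_int by blast
  have mpos: "real m > 0" using assms by simp
  have "real_of_int n = 1 / real m" using n pi_gt_zero mpos by (simp add: field_simps)
  moreover have "0 < 1 / real m" "1 / real m < 1" using assms by auto
  ultimately have "0 < n" "n < 1" by (metis of_int_0_less_iff, metis of_int_less_1_iff)
  thus False by simp
qed

lemma coprime_add_mod: "coprime (n + d) d = coprime n (d::nat)"
proof -
  have c: "[n + d = n] (mod d)" by (simp add: cong_def)
  show ?thesis using cong_imp_coprime[OF c] cong_imp_coprime[OF cong_sym[OF c]] by blast
qed

lemma separation:
  assumes d1: "d \<ge> 1" and g: "coprime g d" "\<not> [g = 1] (mod d)"
  shows "\<exists>chi. dirichlet_char d chi \<and> chi g \<noteq> 1"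
proof -
  define H0 where "H0 = {1 mod d}"
  have d0: "d \<noteq> 0" using d1 by simp
  have sg: "subgrp d H0" unfolding subgrp_def H0_def units_mod_def
    using d1 d0 by (auto simp: coprime_mod_left_iff mod_mult_eq)
  have pc: "pchar d H0 (\<lambda>_. 1)" unfolding pchar_def by simp
  define x where "x = g mod d"
  have x: "x \<in> units_mod d" unfolding x_def units_mod_def using d0 g by (simp add: coprime_mod_left_iff)
  have xn: "x \<notin> H0" using g(2) unfolding x_def H0_def cong_def by simp
  define m where "m = (LEAST k. k > 0 \<and> x ^ k mod d \<in> H0)"
  have mp: "m > 0" "x ^ m mod d \<in> H0" using least_props[OF d1 sg x] m_def by auto
  have "m \<noteq> 1"
  proof
    assume "m = 1"
    hence "x mod d \<in> H0" using mp by simp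
    thus False using xn x_def by simp
  qed
  hence m2: "m \<ge> 2" using mp by simp
  define z where "z = cis (2 * pi / real m)"
  have "z ^ m = cis (real m * (2 * pi / real m))" unfolding z_def by (rule Complex.DeMoivre)
  also have "\<dots> = 1" using mp by simp
  finally have zm: "z ^ m = (\<lambda>_. 1) (x ^ m mod d)" by simp
  have z1: "z \<noteq> 1" unfolding z_def by (rule cis_ne_1[OF m2])
  obtain H' psi' where H': "subgrp d H'" "pchar d H' psi'" "x \<in> H'" "psi' x = z"
    using extend_step[OF d1 sg pc x xn m_def zm] by blast
  obtain psi where psi: "pchar d (units_mod d) psi" "\<forall>h\<in>H'. psi h = psi' h"
    using extend_full[OF d1 H'(1,2)] by blast
  have px: "psi x = z" using psi H' by simp
  define chi where "chi k = (if coprime k d then psi (k mod d) else 0)" for k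
  have um: "k mod d \<in> units_mod d" if "coprime k d" for k
    using that d0 by (simp add: units_mod_def coprime_mod_left_iff)
  have "dirichlet_char d chi"
    unfolding dirichlet_char_def
  proof (intro conjI allI)
    fix a b
    show "chi (a * b) = chi a * chi b"
    proof (cases "coprime a d \<and> coprime b d")
      case True
      have "psi (a * b mod d) = psi ((a mod d) * (b mod d) mod d)" by (simp add: mod_mult_eq)
      also have "\<dots> = psi (a mod d) * psi (b mod d)"
        using psi(1) um True by (simp add: pchar_def)
      finally show ?thesis using True unfolding chi_def by simp
    next
      case False
      then show ?thesis unfolding chi_def by auto
    qed
  next
    fix n
    show "chi (n + d) = chi n" unfolding chi_def by (simp add: coprime_add_mod)
  next
    fix n
    show "(chi n = 0) = (\<not> coprime n d)"
      unfolding chi_def using psi(1) um by (auto simp: pchar_def)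
  qed
  moreover have "chi g = z" unfolding chi_def using g px x_def by simp
  ultimately show ?thesis using z1 by blast
qed



lemma dc_mult: "dirichlet_char d chi \<Longrightarrow> chi (m * n) = chi m * chi n"
  unfolding dirichlet_char_def by blast

lemma dc_zero_iff: "dirichlet_char d chi \<Longrightarrow> chi n = 0 \<longleftrightarrow> \<not> coprime n d"
  unfolding dirichlet_char_def by blast

lemma dc_one: assumes "dirichlet_char d chi" shows "chi 1 = 1"
proof -
  have "chi 1 = chi 1 * chi 1" using dc_mult[OF assms, of 1 1] by simp
  moreover have "chi 1 \<noteq> 0" using dc_zero_iff[OF assms, of 1] by simp
  ultimately show ?thesis by (metis mult_cancel_left1)
qed

lemma dc_periodic_mult: assumes "dirichlet_char d chi" shows "chi (n + k * d) = chi n"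
proof (induction k)
  case 0
  then show ?case by simp
next
  case (Suc k)
  have "n + Suc k * d = (n + k * d) + d" by simp
  hence "chi (n + Suc k * d) = chi ((n + k * d) + d)" by (simp only:)
  also have "\<dots> = chi (n + k * d)" using assms unfolding dirichlet_char_def by blast
  finally show ?case using Suc by simp
qed

lemma dc_mod: assumes "dirichlet_char d chi" shows "chi (n mod d) = chi n"
proof -
  have "chi (n mod d + (n div d) * d) = chi (n mod d)" by (rule dc_periodic_mult[OF assms])
  thus ?thesis by simp
qed

lemma dc_cong: assumes "dirichlet_char d chi" "[m = n] (mod d)" shows "chi m = chi n"
  using dc_mod[OF assms(1), of m] dc_mod[OF assms(1), of n] assms(2) unfolding cong_def by simp

lemma dc_pow: assumes "dirichlet_char d chi" shows "chi (n ^ k) = chi n ^ k"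
proof (induction k)
  case 0
  show ?case using dc_one[OF assms] by (metis power_0)
next
  case (Suc k)
  then show ?case using dc_mult[OF assms, of n "n ^ k"] by (metis power_Suc)
qed

lemma dc_unit_pow:
  assumes "dirichlet_char d chi" "d \<ge> 1" "coprime n d"
  shows "chi n ^ totient d = 1"
proof -
  have "chi (n ^ totient d) = chi 1" using dc_cong[OF assms(1) euler_theorem[OF assms(3)]] .
  thus ?thesis using dc_pow[OF assms(1), of n "totient d"] dc_one[OF assms(1)] by metis
qed

lemma dc_norm:
  assumes "dirichlet_char d chi" "d \<ge> 1" "coprime n d"
  shows "norm (chi n) = 1"
proof -
  have "norm (chi n) ^ totient d = 1 ^ totient d"
    using dc_unit_pow[OF assms] by (metis norm_one norm_power power_one)
  moreover have "totient d > 0" using assms by simp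
  ultimately show ?thesis using power_eq_iff_eq_base[of "totient d" "norm (chi n)" 1] by simp
qed

lemma dc_norm_le:
  assumes "dirichlet_char d chi" "d \<ge> 1"
  shows "norm (chi n) \<le> 1"
proof (cases "coprime n d")
  case True
  then show ?thesis using dc_norm[OF assms] by simp
next
  case False
  then have "chi n = 0" using dc_zero_iff[OF assms(1)] by blast
  then show ?thesis by simp
qed

lemma dc_cnj_mult:
  assumes "dirichlet_char d chi" "d \<ge> 1"
  shows "cnj (chi n) * chi n = (if coprime n d then 1 else 0)"
proof (cases "coprime n d")
  case True
  have "chi n * cnj (chi n) = complex_of_real ((norm (chi n))\<^sup>2)"
    by (rule complex_norm_square[symmetric])
  then show ?thesis using True dc_norm[OF assms True] by (simp add: mult.commute)
next
  case False
  then show ?thesis using dc_zero_iff[OF assms(1)] by simp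
qed

lemma dc_prod:
  assumes "dirichlet_char d c1" "dirichlet_char d c2"
  shows "dirichlet_char d (\<lambda>k. c1 k * c2 k)"
  using assms unfolding dirichlet_char_def by (auto simp: mult_ac)

lemma dc_cnj_char:
  assumes "dirichlet_char d c"
  shows "dirichlet_char d (\<lambda>k. cnj (c k))"
  using assms unfolding dirichlet_char_def by auto

definition chi0 :: "nat \<Rightarrow> nat \<Rightarrow> complex" where
  "chi0 d n = (if coprime n d then 1 else 0)"

lemma dc_chi0: "dirichlet_char d (chi0 d)"
  unfolding dirichlet_char_def chi0_def by (auto simp: coprime_add_mod)

lemma finite_chars:
  assumes "d \<ge> 1"
  shows "finite {chi. dirichlet_char d chi}"
proof -
  define V where "V = {z::complex. z ^ totient d = 1} \<union> {0}"
  have t: "totient d \<ge> 1" using assms by (simp add: Suc_le_eq)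
  have fV: "finite V" unfolding V_def using finite_roots_unity[OF t] by simp
  define R where "R chi = restrict chi {..<d}" for chi :: "nat \<Rightarrow> complex"
  have "R ` {chi. dirichlet_char d chi} \<subseteq> PiE {..<d} (\<lambda>_. V)"
  proof
    fix f assume "f \<in> R ` {chi. dirichlet_char d chi}"
    then obtain chi where chi: "dirichlet_char d chi" "f = R chi" by blast
    have "chi n \<in> V" for n
      using dc_unit_pow[OF chi(1) assms] dc_zero_iff[OF chi(1)] unfolding V_def
      by (cases "coprime n d") auto
    thus "f \<in> PiE {..<d} (\<lambda>_. V)" using chi(2) unfolding R_def by auto
  qed
  hence fin: "finite (R ` {chi. dirichlet_char d chi})"
    by (rule finite_subset) (intro finite_PiE fV, simp)
  have "inj_on R {chi. dirichlet_char d chi}"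
  proof (rule inj_onI)
    fix c1 c2 assume c: "c1 \<in> {chi. dirichlet_char d chi}" "c2 \<in> {chi. dirichlet_char d chi}" "R c1 = R c2"
    show "c1 = c2"
    proof
      fix n
      have "n mod d < d" using assms by simp
      hence "c1 (n mod d) = c2 (n mod d)" using c(3) unfolding R_def by (metis lessThan_iff restrict_apply')
      thus "c1 n = c2 n" using dc_mod[of d c1 n] dc_mod[of d c2 n] c by simp
    qed
  qed
  thus ?thesis using fin finite_imageD by blast
qed

lemma inv_mod_ex:
  fixes a d :: nat
  assumes "d \<ge> 1" "coprime a d"
  shows "\<exists>a'. [a * a' = 1] (mod d)"
proof -
  have t: "totient d > 0" using assms by simp
  have "a * a ^ (totient d - 1) = a ^ totient d" using t by (cases "totient d") auto
  thus ?thesis using euler_theorem[OF assms(2)] by metis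
qed

lemma sum_chars_unit:
  assumes d1: "d \<ge> 1" and k: "coprime k d"
  shows "(\<Sum>chi\<in>{chi. dirichlet_char d chi}. chi k) =
         (if [k = 1] (mod d) then of_nat (card {chi. dirichlet_char d chi}) else 0)"
proof (cases "[k = 1] (mod d)")
  case True
  have "(\<Sum>chi\<in>{chi. dirichlet_char d chi}. chi k) = (\<Sum>chi\<in>{chi. dirichlet_char d chi}. 1)"
    by (intro sum.cong refl) (use True dc_cong dc_one in fastforce)
  then show ?thesis using True by simp
next
  case False
  define X where "X = {chi. dirichlet_char d chi}"
  obtain c0 where c0: "dirichlet_char d c0" "c0 k \<noteq> 1" using separation[OF d1 k False] by blast
  define f where "f chi = (\<lambda>n. c0 n * chi n)" for chi :: "nat \<Rightarrow> complex"
  have inj: "inj_on f X"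
  proof (rule inj_onI)
    fix c1 c2 assume c: "c1 \<in> X" "c2 \<in> X" "f c1 = f c2"
    show "c1 = c2"
    proof
      fix n
      show "c1 n = c2 n"
      proof (cases "coprime n d")
        case True
        hence "c0 n \<noteq> 0" using dc_zero_iff[OF c0(1)] by simp
        moreover have "c0 n * c1 n = c0 n * c2 n" using c(3) unfolding f_def by metis
        ultimately show ?thesis by simp
      next
        case False
        then show ?thesis using c dc_zero_iff[of d c1 n] dc_zero_iff[of d c2 n] unfolding X_def by auto
      qed
    qed
  qed
  have img: "f ` X = X"
  proof
    show "f ` X \<subseteq> X" unfolding f_def X_def using dc_prod[OF c0(1)] by auto
  next
    show "X \<subseteq> f ` X"
    proof
      fix chi assume chi: "chi \<in> X"
      define c' where "c' = (\<lambda>n. cnj (c0 n) * chi n)"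
      have "c' \<in> X" unfolding c'_def X_def using dc_prod[OF dc_cnj_char[OF c0(1)]] chi X_def by auto
      moreover have "f c' = chi"
      proof
        fix n
        have "c0 n * (cnj (c0 n) * chi n) = (cnj (c0 n) * c0 n) * chi n" by (simp add: mult_ac)
        also have "\<dots> = chi n" using dc_cnj_mult[OF c0(1) d1] chi dc_zero_iff unfolding X_def
          by (cases "coprime n d") auto
        finally show "f c' n = chi n" unfolding f_def c'_def .
      qed
      ultimately show "chi \<in> f ` X" by blast
    qed
  qed
  have fin: "finite X" unfolding X_def using finite_chars[OF d1] .
  have "(\<Sum>chi\<in>X. chi k) = (\<Sum>chi\<in>f ` X. chi k)" using img by simp
  also have "\<dots> = (\<Sum>chi\<in>X. f chi k)" using sum.reindex[OF inj] by simp
  also have "\<dots> = c0 k * (\<Sum>chi\<in>X. chi k)" unfolding f_def by (simp add: sum_distrib_left)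
  finally have "(1 - c0 k) * (\<Sum>chi\<in>X. chi k) = 0" by (simp add: algebra_simps)
  hence "(\<Sum>chi\<in>X. chi k) = 0" using c0(2) by simp
  then show ?thesis using False X_def by simp
qed

lemma card_units:
  assumes "d \<ge> 1"
  shows "card (units_mod d) = totient d"
proof (cases "d = 1")
  case True
  have "units_mod d = {0}" unfolding units_mod_def True by auto
  then show ?thesis using True by simp
next
  case False
  hence d2: "d > 1" using assms by simp
  have "units_mod d = totatives d"
  proof
    show "units_mod d \<subseteq> totatives d"
    proof
      fix x assume "x \<in> units_mod d"
      hence x: "x < d" "coprime x d" by (auto simp: units_mod_def)
      have "x \<noteq> 0"
      proof
        assume "x = 0"
        hence "coprime 0 d" using x by simp
        thus False using d2 by simp
      qed
      thus "x \<in> totatives d" using x by (auto simp: totatives_def)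
    qed
  next
    show "totatives d \<subseteq> units_mod d"
    proof
      fix x assume "x \<in> totatives d"
      thus "x \<in> units_mod d" using totatives_less[OF _ d2] by (auto simp: totatives_def units_mod_def)
    qed
  qed
  then show ?thesis by (simp add: totient_def)
qed

lemma sum_units_char:
  assumes d1: "d \<ge> 1" and chi: "dirichlet_char d chi" and j0: "j0 \<in> units_mod d" "chi j0 \<noteq> 1"
  shows "(\<Sum>j\<in>units_mod d. chi j) = 0"
proof -
  define U where "U = units_mod d"
  define f where "f j = j0 * j mod d" for j
  have j0c: "coprime j0 d" using j0 by (auto simp: units_mod_def)
  have sub: "f ` U \<subseteq> U"
    unfolding f_def U_def units_mod_def using d1 j0c by (auto simp: coprime_mod_left_iff)
  have inj: "inj_on f U"
  proof (rule inj_onI)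
    fix x y assume xy: "x \<in> U" "y \<in> U" "f x = f y"
    hence "[j0 * x = j0 * y] (mod d)" by (simp add: f_def cong_def)
    hence "[x = y] (mod d)" using cong_mult_lcancel_nat[OF j0c] by blast
    thus "x = y" using xy unfolding U_def units_mod_def cong_def by simp
  qed
  have img: "f ` U = U" using endo_inj_surj[OF _ sub inj] finite_units_mod U_def by blast
  have "(\<Sum>j\<in>U. chi j) = (\<Sum>j\<in>f ` U. chi j)" using img by simp
  also have "\<dots> = (\<Sum>j\<in>U. chi (f j))" using sum.reindex[OF inj] by simp
  also have "\<dots> = (\<Sum>j\<in>U. chi j0 * chi j)"
    unfolding f_def using dc_mod[OF chi] dc_mult[OF chi] by simp
  also have "\<dots> = chi j0 * (\<Sum>j\<in>U. chi j)" by (simp add: sum_distrib_left)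
  finally have "(1 - chi j0) * (\<Sum>j\<in>U. chi j) = 0" by (simp add: algebra_simps)
  thus ?thesis using j0(2) U_def by simp
qed

lemma card_chars:
  assumes d1: "d \<ge> 1"
  shows "card {chi. dirichlet_char d chi} = totient d"
proof -
  define X where "X = {chi. dirichlet_char d chi}"
  define U where "U = units_mod d"
  have fX: "finite X" unfolding X_def using finite_chars[OF d1] .
  have fU: "finite U" unfolding U_def by (rule finite_units_mod)
  have oneU: "1 mod d \<in> U" unfolding U_def units_mod_def using d1
    by (simp add: coprime_mod_left_iff)
  have "(\<Sum>j\<in>U. \<Sum>chi\<in>X. chi j) = (\<Sum>j\<in>U. if j = 1 mod d then of_nat (card X) else 0)"
  proof (intro sum.cong refl)
    fix j assume j: "j \<in> U"
    hence jc: "coprime j d" "j < d" unfolding U_def units_mod_def by auto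
    have "[j = 1] (mod d) \<longleftrightarrow> j = 1 mod d" using jc(2) unfolding cong_def by simp
    thus "(\<Sum>chi\<in>X. chi j) = (if j = 1 mod d then of_nat (card X) else 0)"
      using sum_chars_unit[OF d1 jc(1)] X_def by simp
  qed
  also have "\<dots> = of_nat (card X)" using oneU by (simp only: sum.delta[OF fU] if_True)
  finally have e1: "(\<Sum>j\<in>U. \<Sum>chi\<in>X. chi j) = of_nat (card X)" .
  have "(\<Sum>j\<in>U. \<Sum>chi\<in>X. chi j) = (\<Sum>chi\<in>X. \<Sum>j\<in>U. chi j)" by (rule sum.swap)
  also have "\<dots> = (\<Sum>chi\<in>X. if chi = chi0 d then of_nat (card U) else 0)"
  proof (intro sum.cong refl)
    fix chi assume chi: "chi \<in> X"
    hence dc: "dirichlet_char d chi" unfolding X_def by simp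
    show "(\<Sum>j\<in>U. chi j) = (if chi = chi0 d then of_nat (card U) else 0)"
    proof (cases "\<forall>j\<in>U. chi j = 1")
      case True
      have "chi = chi0 d"
      proof
        fix n
        show "chi n = chi0 d n"
        proof (cases "coprime n d")
          case c: True
          hence "n mod d \<in> U" unfolding U_def units_mod_def using d1 by (simp add: coprime_mod_left_iff)
          hence "chi (n mod d) = 1" using True by blast
          thus ?thesis using dc_mod[OF dc] c by (simp add: chi0_def)
        next
          case False
          thus ?thesis using dc_zero_iff[OF dc, of n] by (simp add: chi0_def)
        qed
      qed
      moreover have "(\<Sum>j\<in>U. chi j) = of_nat (card U)" using True by simp
      ultimately show ?thesis by simp
    next
      case False
      then obtain j0 where "j0 \<in> U" "chi j0 \<noteq> 1" by blast
      hence "(\<Sum>j\<in>U. chi j) = 0" using sum_units_char[OF d1 dc] U_def by blast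
      moreover have "chi \<noteq> chi0 d"
      proof
        assume "chi = chi0 d"
        hence "chi j0 = 1" using \<open>j0 \<in> U\<close> unfolding U_def units_mod_def chi0_def by simp
        thus False using \<open>chi j0 \<noteq> 1\<close> by simp
      qed
      ultimately show ?thesis by simp
    qed
  qed
  also have "\<dots> = of_nat (card U)"
  proof -
    have "chi0 d \<in> X" using dc_chi0 X_def by simp
    thus ?thesis by (simp only: sum.delta[OF fX] if_True)
  qed
  finally have "(of_nat (card X) :: complex) = of_nat (card U)" using e1 by simp
  hence "card X = card U" using of_nat_eq_iff by blast
  thus ?thesis using card_units[OF d1] X_def U_def by simp
qed

lemma orthogonality:
  assumes d1: "d \<ge> 1" and a: "coprime a d"
  shows "(\<Sum>chi\<in>{chi. dirichlet_char d chi}. cnj (chi a) * chi n) =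
         (if [n = a] (mod d) then of_nat (totient d) else 0)"
proof (cases "coprime n d")
  case False
  have "\<not> [n = a] (mod d)" using False a cong_imp_coprime cong_sym by blast
  moreover have "(\<Sum>chi\<in>{chi. dirichlet_char d chi}. cnj (chi a) * chi n) = 0"
    using False dc_zero_iff by (intro sum.neutral) auto
  ultimately show ?thesis by simp
next
  case True
  obtain a' where a': "[a * a' = 1] (mod d)" using inv_mod_ex[OF d1 a] by blast
  have a'c: "coprime a' d"
  proof -
    have "coprime (a * a') d" using cong_imp_coprime[OF cong_sym[OF a']] by simp
    thus ?thesis by simp
  qed
  have k: "coprime (a' * n) d" using a'c True by simp
  have eq: "cnj (chi a) * chi n = chi (a' * n)" if chi: "dirichlet_char d chi" for chi
  proof -
    have "chi a * chi a' = 1" using dc_cong[OF chi a'] dc_mult[OF chi] dc_one[OF chi] by metis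
    hence "cnj (chi a) = cnj (chi a) * chi a * chi a'" by (simp add: mult.assoc)
    also have "\<dots> = chi a'" using dc_cnj_mult[OF chi d1, of a] a by simp
    finally show ?thesis using dc_mult[OF chi] by simp
  qed
  have iff: "[a' * n = 1] (mod d) \<longleftrightarrow> [n = a] (mod d)"
  proof
    assume h: "[a' * n = 1] (mod d)"
    have "[a * (a' * n) = a * 1] (mod d)" using cong_scalar_left[OF h] .
    moreover have "[a * (a' * n) = n] (mod d)"
    proof -
      have "[a * a' * n = 1 * n] (mod d)" using cong_scalar_right[OF a'] .
      thus ?thesis by (simp add: mult.assoc)
    qed
    ultimately show "[n = a] (mod d)" by (metis cong_sym cong_trans mult_1_right)
  next
    assume h: "[n = a] (mod d)"
    have "[a' * n = a' * a] (mod d)" using cong_scalar_left[OF h] .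
    thus "[a' * n = 1] (mod d)" using a' by (metis cong_trans mult.commute)
  qed
  have "(\<Sum>chi\<in>{chi. dirichlet_char d chi}. cnj (chi a) * chi n) =
        (\<Sum>chi\<in>{chi. dirichlet_char d chi}. chi (a' * n))"
    using eq by (intro sum.cong refl) auto
  also have "\<dots> = (if [n = a] (mod d) then of_nat (totient d) else 0)"
    using sum_chars_unit[OF d1 k] iff card_chars[OF d1] by simp
  finally show ?thesis .
qed


definition smooth_set :: "nat set \<Rightarrow> nat set" where
  "smooth_set P = {n. n > 0 \<and> prime_factors n \<subseteq> P}"

lemma mult_prod_prime_powers:
  fixes F :: "nat \<Rightarrow> complex"
  assumes F1: "F 1 = 1" and mult: "\<And>m n. coprime m n \<Longrightarrow> F (m * n) = F m * F n"
    and fin: "finite P" and pr: "\<And>p. p \<in> P \<Longrightarrow> prime p"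
  shows "F (\<Prod>p\<in>P. p ^ e p) = (\<Prod>p\<in>P. F (p ^ e p))"
  using fin pr
proof (induction P rule: finite_induct)
  case empty
  then show ?case using F1 by simp
next
  case (insert q P)
  have "coprime (q ^ e q) (\<Prod>p\<in>P. p ^ e p)"
  proof (rule prod_coprime_right)
    fix p assume p: "p \<in> P"
    have "coprime q p" using primes_coprime[of q p] insert p by auto
    thus "coprime (q ^ e q) (p ^ e p)" by simp
  qed
  hence "F (\<Prod>p\<in>insert q P. p ^ e p) = F (q ^ e q) * F (\<Prod>p\<in>P. p ^ e p)"
    using insert.hyps mult by simp
  also have "\<dots> = F (q ^ e q) * (\<Prod>p\<in>P. F (p ^ e p))" using insert by simp
  also have "\<dots> = (\<Prod>p\<in>insert q P. F (p ^ e p))" using insert.hyps by simp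
  finally show ?case .
qed

lemma prime_factor_le: "(p::nat) \<in> prime_factors n \<Longrightarrow> n > 0 \<Longrightarrow> p \<le> n"
  by (auto simp: in_prime_factors_iff intro: dvd_imp_le)

lemma euler_finite:
  fixes F :: "nat \<Rightarrow> complex"
  assumes F1: "F 1 = 1" and mult: "\<And>m n. coprime m n \<Longrightarrow> F (m * n) = F m * F n"
    and abs: "(\<lambda>n. norm (F n)) summable_on UNIV"
    and fin: "finite P" and pr: "\<And>p. p \<in> P \<Longrightarrow> prime p"
  shows "infsum F (smooth_set P) = (\<Prod>p\<in>P. infsum (\<lambda>k. F (p ^ k)) UNIV)"
proof -
  define pi' where "pi' g = (\<Prod>p\<in>P. p ^ g p)" for g :: "nat \<Rightarrow> nat"
  have absp: "(\<lambda>k. norm (F (p ^ k))) summable_on UNIV" if p: "p \<in> P" for p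
  proof -
    have p1: "p > 1" using pr[OF p] prime_gt_1_nat by blast
    have inj: "inj_on (\<lambda>k. p ^ k) UNIV" by (rule inj_onI) (use p1 power_inject_exp in blast)
    have "(\<lambda>n. norm (F n)) summable_on range (\<lambda>k. p ^ k)"
      using summable_on_subset_banach[OF abs] by blast
    hence "((\<lambda>n. norm (F n)) \<circ> (\<lambda>k. p ^ k)) summable_on UNIV"
      using summable_on_reindex[OF inj] by blast
    thus ?thesis by (simp add: o_def)
  qed
  have "(\<Prod>p\<in>P. infsum (\<lambda>k. F (p ^ k)) UNIV) =
        infsum (\<lambda>g. \<Prod>p\<in>P. F (p ^ g p)) (PiE P (\<lambda>_. UNIV))"
    by (rule infsum_prod_PiE_abs[symmetric]) (use fin absp in auto)
  also have "\<dots> = infsum (\<lambda>g. F (pi' g)) (PiE P (\<lambda>_. UNIV))"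
    unfolding pi'_def using mult_prod_prime_powers[OF F1 mult fin pr] by simp
  also have "\<dots> = infsum F (pi' ` PiE P (\<lambda>_. UNIV))"
  proof -
    have "inj_on pi' (PiE P (\<lambda>_. UNIV))"
    proof (rule inj_onI)
      fix g1 g2 assume g: "g1 \<in> PiE P (\<lambda>_. UNIV)" "g2 \<in> PiE P (\<lambda>_. UNIV)" "pi' g1 = pi' g2"
      show "g1 = g2"
      proof
        fix q
        show "g1 q = g2 q"
        proof (cases "q \<in> P")
          case True
          have "multiplicity q (pi' g1) = g1 q"
            unfolding pi'_def using multiplicity_prod_prime_powers[OF fin pr pr[OF True]] True by simp
          moreover have "multiplicity q (pi' g2) = g2 q"
            unfolding pi'_def using multiplicity_prod_prime_powers[OF fin pr pr[OF True]] True by simp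
          ultimately show ?thesis using g(3) by simp
        next
          case False
          then show ?thesis using g PiE_arb by metis
        qed
      qed
    qed
    thus ?thesis by (simp add: infsum_reindex o_def)
  qed
  also have "pi' ` PiE P (\<lambda>_. UNIV) = smooth_set P"
  proof
    show "pi' ` PiE P (\<lambda>_. UNIV) \<subseteq> smooth_set P"
    proof
      fix n assume "n \<in> pi' ` PiE P (\<lambda>_. UNIV)"
      then obtain g where g: "n = pi' g" by blast
      have pos: "n > 0" unfolding g pi'_def using pr prime_gt_0_nat
        by (intro prod_pos) (simp add: fin)
      have "prime_factors n \<subseteq> P"
      proof
        fix q assume q: "q \<in> prime_factors n"
        hence qp: "prime q" "multiplicity q n > 0" by (auto simp: prime_factors_multiplicity)
        have "multiplicity q n = (if q \<in> P then g q else 0)"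
          unfolding g pi'_def by (rule multiplicity_prod_prime_powers[OF fin pr qp(1)])
        thus "q \<in> P" using qp(2) by (cases "q \<in> P") auto
      qed
      thus "n \<in> smooth_set P" using pos by (simp add: smooth_set_def)
    qed
  next
    show "smooth_set P \<subseteq> pi' ` PiE P (\<lambda>_. UNIV)"
    proof
      fix n assume "n \<in> smooth_set P"
      hence n: "n > 0" "prime_factors n \<subseteq> P" by (auto simp: smooth_set_def)
      define g where "g = restrict (\<lambda>p. multiplicity p n) P"
      have gP: "g \<in> PiE P (\<lambda>_. UNIV)" unfolding g_def by simp
      have "pi' g = (\<Prod>p\<in>P. p ^ multiplicity p n)" unfolding pi'_def g_def by simp
      also have "\<dots> = (\<Prod>p\<in>prime_factors n. p ^ multiplicity p n)"
      proof (rule prod.mono_neutral_right[OF fin n(2)])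
        show "\<forall>p\<in>P - prime_factors n. p ^ multiplicity p n = 1"
          using pr by (auto simp: prime_factors_multiplicity)
      qed
      also have "\<dots> = n" using prime_factorization_nat[OF n(1)] by simp
      finally show "n \<in> pi' ` PiE P (\<lambda>_. UNIV)" using gP by force
    qed
  qed
  finally show ?thesis ..
qed

lemma euler_limit:
  fixes F :: "nat \<Rightarrow> complex"
  assumes F1: "F 1 = 1" and mult: "\<And>m n. coprime m n \<Longrightarrow> F (m * n) = F m * F n"
    and abs: "(\<lambda>n. norm (F n)) summable_on UNIV" and F0: "F 0 = 0"
  shows "(\<lambda>N. \<Prod>p\<in>{p. prime p \<and> p \<le> N}. infsum (\<lambda>k. F (p ^ k)) UNIV) \<longlonglongrightarrow> infsum F UNIV"
proof -
  define G where "G = (\<lambda>n. norm (F n))"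
  have absG: "G summable_on UNIV" unfolding G_def using abs .
  have sumF: "F summable_on A" for A
    using summable_on_subset_banach[OF abs_summable_summable[OF abs]] by blast
  have sumG: "G summable_on A" for A using summable_on_subset_banach[OF absG] by blast
  have Gnn: "G n \<ge> 0" for n unfolding G_def by simp
  define T where "T = infsum G UNIV"
  have "G sums T" unfolding T_def using has_sum_imp_sums[OF has_sum_infsum[OF absG]] .
  hence lim1: "(\<lambda>N. sum G {..N}) \<longlonglongrightarrow> T" by (simp add: sums_def_le)
  have tail_eq: "infsum G {N<..} = T - sum G {..N}" for N
  proof -
    have "UNIV = {..N} \<union> {N<..}" by auto
    moreover have "{..N} \<inter> {N<..} = {}" by auto
    ultimately have "T = infsum G {..N} + infsum G {N<..}" unfolding T_def
      using infsum_Un_disjoint[OF sumG sumG] by metis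
    thus ?thesis by (simp add: infsum_finite)
  qed
  have tail: "(\<lambda>N. infsum G {N<..}) \<longlonglongrightarrow> 0"
    unfolding tail_eq using tendsto_diff[OF tendsto_const lim1, of T] by simp
  have bound: "norm (infsum F UNIV - infsum F (smooth_set {p. prime p \<and> p \<le> N})) \<le> infsum G {N<..}" for N
  proof -
    define S where "S = smooth_set {p. prime p \<and> p \<le> N}"
    have "UNIV = S \<union> (UNIV - S)" by auto
    moreover have "S \<inter> (UNIV - S) = {}" by auto
    ultimately have "infsum F UNIV = infsum F S + infsum F (UNIV - S)"
      using infsum_Un_disjoint[OF sumF sumF] by metis
    hence "norm (infsum F UNIV - infsum F S) = norm (infsum F (UNIV - S))" by simp
    also have "\<dots> \<le> infsum G (UNIV - S)"
    proof -
      have h: "(\<lambda>x. norm (F x)) summable_on (UNIV - S)" using summable_on_subset_banach[OF abs] by blast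
      show ?thesis unfolding G_def using norm_infsum_bound[OF h] by simp
    qed
    also have "\<dots> \<le> infsum G {N<..}"
    proof (rule infsum_mono_neutral[OF sumG sumG])
      fix x assume x: "x \<in> (UNIV - S) - {N<..}"
      have "x = 0"
      proof (rule ccontr)
        assume "x \<noteq> 0"
        hence "x > 0" "x \<le> N" using x by auto
        hence "prime_factors x \<subseteq> {p. prime p \<and> p \<le> N}"
          using prime_factor_le by fastforce
        hence "x \<in> S" unfolding S_def smooth_set_def using \<open>x > 0\<close> by simp
        thus False using x by simp
      qed
      thus "G x \<le> 0" unfolding G_def using F0 by simp
    qed (auto simp: Gnn)
    finally show ?thesis unfolding S_def .
  qed
  have "(\<lambda>N. infsum F UNIV - infsum F (smooth_set {p. prime p \<and> p \<le> N})) \<longlonglongrightarrow> 0"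
    by (rule Lim_null_comparison[OF _ tail]) (use bound in simp)
  hence "(\<lambda>N. infsum F UNIV - (infsum F UNIV - infsum F (smooth_set {p. prime p \<and> p \<le> N})))
          \<longlonglongrightarrow> infsum F UNIV - 0"
    by (intro tendsto_diff tendsto_const)
  hence "(\<lambda>N. infsum F (smooth_set {p. prime p \<and> p \<le> N})) \<longlonglongrightarrow> infsum F UNIV" by simp
  moreover have "infsum F (smooth_set {p. prime p \<and> p \<le> N}) =
     (\<Prod>p\<in>{p. prime p \<and> p \<le> N}. infsum (\<lambda>k. F (p ^ k)) UNIV)" for N
    by (rule euler_finite[OF F1 mult abs]) auto
  ultimately show ?thesis by simp
qed


definition gg :: "nat \<Rightarrow> real" where
  "gg p = ((real p)^2 - 1) / ((real p)^2 - real p - 1)"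

definition fw :: "nat \<Rightarrow> real" where
  "fw t = (\<Prod>p\<in>prime_factors t. gg p)"

lemma r_fun_eq: "r_fun t = fw t / (real t)^2"
  unfolding r_fun_def fw_def gg_def by simp

lemma den_pos: "p \<ge> 2 \<Longrightarrow> (real p)^2 - real p - 1 > 0"
proof -
  assume p: "p \<ge> 2"
  hence "real p \<ge> 2" by simp
  hence "real p * (real p - 1) \<ge> 2 * 1" by (intro mult_mono) auto
  thus ?thesis by (simp add: power2_eq_square algebra_simps)
qed

lemma gg_ge1: "p \<ge> 2 \<Longrightarrow> gg p \<ge> 1"
proof -
  assume p: "p \<ge> 2"
  have d: "(real p)^2 - real p - 1 > 0" using den_pos[OF p] .
  have "(real p)^2 - real p - 1 \<le> (real p)^2 - 1" by simp
  thus ?thesis unfolding gg_def using d by simp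
qed

lemma gg_sq_bound:
  assumes "prime p"
  shows "(gg p)^2 \<le> real p * (if p = 2 then 9/2 else 1)"
proof (cases "p = 2")
  case True
  then show ?thesis by (simp add: gg_def power2_eq_square)
next
  case False
  have p2: "p \<ge> 2" using assms prime_ge_2_nat by blast
  hence p3: "p \<ge> 3" using False by simp
  hence rp: "real p \<ge> 3" by simp
  have d: "(real p)^2 - real p - 1 > 0" using den_pos[OF p2] .
  have "(3 * real p + 1) * (real p - 3) \<ge> 0" using rp by simp
  hence "5 * ((real p)^2 - 1) \<le> 8 * ((real p)^2 - real p - 1)"
    by (simp add: power2_eq_square algebra_simps)
  hence g1: "gg p \<le> 8/5" unfolding gg_def using d by (simp add: field_simps)
  have g0: "gg p \<ge> 0" using gg_ge1[OF p2] by simp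
  have "(gg p)^2 \<le> (8/5)^2" using g1 g0 by (intro power_mono) auto
  also have "\<dots> \<le> real p" using rp by (simp add: power2_eq_square)
  finally show ?thesis using False by simp
qed

lemma prod_pf_le: "(n::nat) > 0 \<Longrightarrow> (\<Prod>p\<in>prime_factors n. p) \<le> n"
proof -
  assume n: "n > 0"
  have "(\<Prod>p\<in>prime_factors n. p) \<le> (\<Prod>p\<in>prime_factors n. p ^ multiplicity p n)"
  proof (rule prod_mono)
    fix p assume p: "p \<in> prime_factors n"
    hence "prime p" "multiplicity p n > 0" by (auto simp: prime_factors_multiplicity)
    moreover have "1 \<le> p" using prime_gt_0_nat[OF \<open>prime p\<close>] by simp
    ultimately have "p \<le> p ^ multiplicity p n" by (intro self_le_power) auto
    thus "0 \<le> p \<and> p \<le> p ^ multiplicity p n" by simp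
  qed
  also have "\<dots> = n" using prime_factorization_nat[OF n] by simp
  finally show ?thesis .
qed

lemma gg_pf_ge1: "p \<in> prime_factors t \<Longrightarrow> gg p \<ge> 1"
  using gg_ge1 prime_ge_2_nat in_prime_factors_imp_prime by blast

lemma fw_ge1: "fw t \<ge> 1"
  unfolding fw_def by (intro prod_ge_1) (use gg_pf_ge1 in auto)

lemma fw_nonneg: "fw t \<ge> 0"
  using fw_ge1[of t] by simp

lemma fw_sq_bound:
  assumes "t > 0"
  shows "(fw t)^2 \<le> 9/2 * real t"
proof -
  have "(fw t)^2 = (\<Prod>p\<in>prime_factors t. (gg p)^2)" unfolding fw_def by (simp add: prod_power_distrib)
  also have "\<dots> \<le> (\<Prod>p\<in>prime_factors t. real p * (if p = 2 then 9/2 else 1))"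
  proof (rule prod_mono)
    fix p assume "p \<in> prime_factors t"
    hence "prime p" by (rule in_prime_factors_imp_prime)
    thus "0 \<le> (gg p)^2 \<and> (gg p)^2 \<le> real p * (if p = 2 then 9/2 else 1)"
      using gg_sq_bound by simp
  qed
  also have "\<dots> = (\<Prod>p\<in>prime_factors t. real p) * (\<Prod>p\<in>prime_factors t. (if p = 2 then 9/2 else 1))"
    by (rule prod.distrib)
  also have "(\<Prod>p\<in>prime_factors t. (if p = 2 then 9/2 else 1)) = (if 2 \<in> prime_factors t then 9/2 else (1::real))"
    by (rule prod.delta) simp
  also have "\<dots> \<le> 9/2" by simp
  hence "(\<Prod>p\<in>prime_factors t. real p) * (if 2 \<in> prime_factors t then 9/2 else (1::real)) \<le> real t * (9/2)"
  proof -
    have "(\<Prod>p\<in>prime_factors t. real p) = real (\<Prod>p\<in>prime_factors t. p)" by simp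
    also have "\<dots> \<le> real t" using prod_pf_le[OF assms] by (simp only: of_nat_le_iff)
    finally have a: "(\<Prod>p\<in>prime_factors t. real p) \<le> real t" .
    show ?thesis by (rule mult_mono[OF a]) (auto intro: prod_nonneg)
  qed
  finally show ?thesis by (simp add: mult.commute)
qed

lemma r_fun_nonneg: "r_fun t \<ge> 0"
  unfolding r_fun_eq using fw_nonneg by simp

lemma r_fun_bound: "r_fun t \<le> 3 * real t powr (-3/2)"
proof (cases "t = 0")
  case True
  then show ?thesis by (simp add: r_fun_eq)
next
  case False
  hence tpos: "real t > 0" by simp
  have "(fw t)^2 \<le> (3 * sqrt (real t))^2"
    using fw_sq_bound[of t] False by (simp add: power_mult_distrib)
  hence f: "fw t \<le> 3 * sqrt (real t)"
    by (rule power2_le_imp_le) simp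
  have "r_fun t \<le> 3 * sqrt (real t) / (real t)^2"
    unfolding r_fun_eq using f tpos by (simp add: divide_right_mono)
  also have "\<dots> = 3 * (real t powr (1/2) / real t powr 2)"
  proof -
    have "real t powr 2 = (real t)^2" using tpos by (simp add: powr_numeral)
    moreover have "real t powr (1/2) = sqrt (real t)" using tpos by (simp add: powr_half_sqrt)
    ultimately show ?thesis by simp
  qed
  also have "\<dots> = 3 * real t powr (-3/2)"
  proof -
    have "real t powr (1/2) / real t powr 2 = real t powr (1/2 - 2)" by (rule powr_diff[symmetric])
    moreover have "(1/2 - 2 :: real) = -3/2" by simp
    ultimately show ?thesis by simp
  qed
  finally show ?thesis .
qed

lemma r_fun_summable: "summable r_fun"
proof (rule summable_comparison_test')
  show "summable (\<lambda>t. 3 * real t powr (-3/2))"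
    by (intro summable_mult) (simp add: summable_real_powr_iff)
  show "norm (r_fun n) \<le> 3 * real n powr (-3/2)" for n
    using r_fun_nonneg r_fun_bound by simp
qed

lemma r_fun_summable_on: "r_fun summable_on A"
proof -
  have "r_fun summable_on UNIV"
    using summable_on_UNIV_nonneg_real_iff[of r_fun] r_fun_nonneg r_fun_summable by simp
  thus ?thesis using summable_on_subset_banach by blast
qed

definition Hw :: "nat \<Rightarrow> nat \<Rightarrow> real" where
  "Hw w n = (\<Prod>p\<in>prime_factors n - prime_factors w. gg p)"

definition Fc :: "nat \<Rightarrow> (nat \<Rightarrow> complex) \<Rightarrow> nat \<Rightarrow> complex" where
  "Fc w chi n = chi n * of_real (Hw w n) / (of_nat n)^2"

lemma fw_mult_w:
  assumes "w > 0" "n > 0"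
  shows "fw (w * n) = fw w * Hw w n"
proof -
  have "prime_factors (w * n) = prime_factors w \<union> (prime_factors n - prime_factors w)"
    using assms by (auto simp: prime_factors_product)
  hence "fw (w * n) = (\<Prod>p\<in>prime_factors w \<union> (prime_factors n - prime_factors w). gg p)"
    unfolding fw_def by simp
  also have "\<dots> = fw w * Hw w n" unfolding fw_def Hw_def
    by (rule prod.union_disjoint) auto
  finally show ?thesis .
qed

lemma Hw_mult:
  assumes "coprime m n" "m > 0" "n > 0"
  shows "Hw w (m * n) = Hw w m * Hw w n"
proof -
  have disj: "prime_factors m \<inter> prime_factors n = {}"
  proof (rule ccontr)
    assume "prime_factors m \<inter> prime_factors n \<noteq> {}"
    then obtain p where p: "p \<in> prime_factors m" "p \<in> prime_factors n" by blast
    have pp: "prime p" using p(1) by (rule in_prime_factors_imp_prime)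
    have "p dvd m" "p dvd n" using p by (simp_all add: in_prime_factors_imp_dvd)
    hence "is_unit p" using coprime_common_divisor[OF assms(1)] by blast
    thus False using pp by (simp add: not_prime_unit)
  qed
  have pf: "prime_factors (m * n) = prime_factors m \<union> prime_factors n"
    using assms by (simp add: prime_factors_product)
  have "prime_factors (m * n) - prime_factors w =
        (prime_factors m - prime_factors w) \<union> (prime_factors n - prime_factors w)"
    unfolding pf by (rule Un_Diff)
  hence "Hw w (m * n) = (\<Prod>p\<in>(prime_factors m - prime_factors w) \<union> (prime_factors n - prime_factors w). gg p)"
    unfolding Hw_def by simp
  also have "\<dots> = Hw w m * Hw w n" unfolding Hw_def
    by (rule prod.union_disjoint) (use disj in auto)
  finally show ?thesis .
qed

lemma Hw_one: "Hw w 1 = 1"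
  unfolding Hw_def by simp

lemma Hw_pp:
  assumes "prime p" "k \<ge> 1" "w > 0"
  shows "Hw w (p ^ k) = (if p dvd w then 1 else gg p)"
proof -
  have "prime_factors (p ^ k) = {p}"
    using assms by (simp add: prime_factors_power prime_prime_factors)
  moreover have "p \<in> prime_factors w \<longleftrightarrow> p dvd w" using assms by (auto simp: in_prime_factors_iff)
  ultimately have "prime_factors (p ^ k) - prime_factors w = (if p dvd w then {} else {p})" by auto
  thus ?thesis unfolding Hw_def by simp
qed

lemma Hw_le_fw: "0 \<le> Hw w n \<and> Hw w n \<le> fw n"
proof -
  have ge: "(\<Prod>p\<in>B. gg p) \<ge> 1" if "B \<subseteq> prime_factors n" for B
    by (intro prod_ge_1) (use that gg_pf_ge1 in blast)
  have "fw n = Hw w n * (\<Prod>p\<in>prime_factors n \<inter> prime_factors w. gg p)"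
    unfolding fw_def Hw_def by (subst prod.subset_diff[of "prime_factors n \<inter> prime_factors w"]) (auto simp: Diff_Int)
  moreover have h1: "Hw w n \<ge> 1" unfolding Hw_def using ge[of "prime_factors n - prime_factors w"] by auto
  moreover have "(\<Prod>p\<in>prime_factors n \<inter> prime_factors w. gg p) \<ge> 1" using ge by auto
  ultimately have "Hw w n * 1 \<le> fw n" using mult_left_mono[of 1 _ "Hw w n"] by simp
  thus ?thesis using h1 by simp
qed

lemma Fc_0: "Fc w chi 0 = 0" unfolding Fc_def by simp

lemma Fc_1: "dirichlet_char d chi \<Longrightarrow> Fc w chi 1 = 1"
  unfolding Fc_def using dc_one Hw_one by simp

lemma Fc_mult:
  assumes "dirichlet_char d chi" "coprime m n"
  shows "Fc w chi (m * n) = Fc w chi m * Fc w chi n"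
proof (cases "m = 0 \<or> n = 0")
  case True
  then show ?thesis unfolding Fc_def by auto
next
  case False
  hence "m > 0" "n > 0" by auto
  hence "Hw w (m * n) = Hw w m * Hw w n" using Hw_mult assms(2) by blast
  moreover have "chi (m * n) = chi m * chi n" using dc_mult[OF assms(1)] .
  ultimately show ?thesis unfolding Fc_def by (simp add: power_mult_distrib)
qed

lemma Fc_norm:
  assumes "dirichlet_char d chi" "d \<ge> 1"
  shows "norm (Fc w chi n) \<le> r_fun n"
proof -
  have "norm (Fc w chi n) = norm (chi n) * Hw w n / (real n)^2"
    unfolding Fc_def using Hw_le_fw[of w n] by (simp add: norm_mult norm_divide norm_power)
  also have "\<dots> \<le> 1 * fw n / (real n)^2"
    using dc_norm_le[OF assms] Hw_le_fw[of w n]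
    by (intro divide_right_mono mult_mono) auto
  also have "\<dots> = r_fun n" by (simp add: r_fun_eq)
  finally show ?thesis .
qed

lemma Fc_abs:
  assumes "dirichlet_char d chi" "d \<ge> 1"
  shows "(\<lambda>n. norm (Fc w chi n)) summable_on UNIV"
proof -
  have "summable (\<lambda>n. norm (Fc w chi n))"
    by (rule summable_comparison_test'[OF r_fun_summable]) (use Fc_norm[OF assms] in simp)
  thus ?thesis using summable_on_UNIV_nonneg_real_iff[of "\<lambda>n. norm (Fc w chi n)"] by simp
qed

lemma Fc_summable:
  assumes "dirichlet_char d chi" "d \<ge> 1"
  shows "Fc w chi summable_on A"
  using summable_on_subset_banach[OF abs_summable_summable[OF Fc_abs[OF assms]]] by blast

lemma p2_minus_chi_nz:
  assumes "dirichlet_char d chi" "d \<ge> 1" "prime p"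
  shows "(of_nat p)^2 - chi p \<noteq> 0"
proof
  assume "(of_nat p)^2 - chi p = 0"
  hence "chi p = (of_nat p)^2" by simp
  hence "norm (chi p) = (real p)^2" by (simp add: norm_power)
  moreover have "(real p)^2 \<ge> 2^2"
  proof (rule power_mono)
    show "2 \<le> real p" using prime_ge_2_nat[OF assms(3)] by simp
  qed simp
  ultimately show False using dc_norm_le[OF assms(1,2), of p] by simp
qed

lemma has_sum_finite_sum:
  fixes f :: "'i \<Rightarrow> 'a \<Rightarrow> 'b::{topological_comm_monoid_add}"
  assumes "finite I" "\<And>i. i \<in> I \<Longrightarrow> (f i has_sum s i) A"
  shows "((\<lambda>x. \<Sum>i\<in>I. f i x) has_sum (\<Sum>i\<in>I. s i)) A"
  using assms
proof (induction I rule: finite_induct)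
  case empty
  then show ?case by simp
next
  case (insert j I)
  have "((\<lambda>x. f j x + (\<Sum>i\<in>I. f i x)) has_sum (s j + (\<Sum>i\<in>I. s i))) A"
    by (rule has_sum_add) (use insert in auto)
  then show ?case using insert.hyps by simp
qed

lemma euler_factor:
  assumes chi: "dirichlet_char d chi" and d1: "d \<ge> 1" and p: "prime p" and w: "w > 0"
  shows "infsum (\<lambda>k. Fc w chi (p ^ k)) UNIV =
     1 + of_real (if p dvd w then 1 else gg p) * chi p / ((of_nat p)^2 - chi p)"
proof -
  define h :: complex where "h = of_real (if p dvd w then 1 else gg p)"
  define q where "q = chi p / (of_nat p)^2"
  have pp: "(of_nat p :: complex) \<noteq> 0" using p prime_gt_0_nat by simp
  have nz: "(of_nat p)^2 - chi p \<noteq> 0" by (rule p2_minus_chi_nz[OF chi d1 p])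
  have eq: "Fc w chi (p ^ k) = h * q ^ k + (if k = 0 then 1 - h else 0)" for k
  proof (cases "k = 0")
    case True
    then show ?thesis using Fc_1[OF chi] by simp
  next
    case False
    hence "Hw w (p ^ k) = (if p dvd w then 1 else gg p)" using Hw_pp[OF p _ w] by simp
    hence "Fc w chi (p ^ k) = chi p ^ k * h / (of_nat p ^ k)^2"
      unfolding Fc_def h_def using dc_pow[OF chi] by simp
    also have "\<dots> = h * q ^ k"
    proof -
      have "((of_nat p :: complex) ^ k)^2 = ((of_nat p)^2)^k" by (metis power_mult mult.commute)
      thus ?thesis unfolding q_def by (simp add: power_divide mult_ac)
    qed
    finally show ?thesis using False by simp
  qed
  have nq: "norm q < 1"
  proof -
    have "norm q = norm (chi p) / (real p)^2" unfolding q_def by (simp add: norm_divide norm_power)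
    also have "\<dots> \<le> 1 / (real p)^2" using dc_norm_le[OF chi d1, of p] by (intro divide_right_mono) auto
    also have "\<dots> < 1"
    proof -
      have rp: "real p \<ge> 2" using prime_ge_2_nat[OF p] by simp
      have "real p * real p \<ge> 2 * 2" by (rule mult_mono) (use rp in auto)
      thus ?thesis by (simp add: power2_eq_square)
    qed
    finally show ?thesis .
  qed
  have g: "((\<lambda>k. q ^ k) has_sum (1 / (1 - q))) UNIV"
  proof (rule norm_summable_imp_has_sum)
    show "summable (\<lambda>k. norm (q ^ k))" using nq by (simp add: norm_power summable_geometric)
    show "(\<lambda>k. q ^ k) sums (1 / (1 - q))" using geometric_sums[OF nq] by simp
  qed
  have g2: "((\<lambda>k. h * q ^ k) has_sum (h * (1 / (1 - q)))) UNIV"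
    by (rule has_sum_cmult_right[OF g])
  have g3: "((\<lambda>k. if k = 0 then 1 - h else 0) has_sum (1 - h)) UNIV"
    by (rule has_sum_finite_neutralI[of "{0}"]) auto
  have "((\<lambda>k. Fc w chi (p ^ k)) has_sum (h * (1 / (1 - q)) + (1 - h))) UNIV"
    unfolding eq by (rule has_sum_add[OF g2 g3])
  hence "infsum (\<lambda>k. Fc w chi (p ^ k)) UNIV = h * (1 / (1 - q)) + (1 - h)"
    by (simp add: has_sum_iff)
  also have "\<dots> = 1 + h * chi p / ((of_nat p)^2 - chi p)"
  proof -
    define D where "D = (of_nat p)^2 - chi p"
    have D0: "D \<noteq> 0" using nz D_def by simp
    have pp2: "(of_nat p :: complex)^2 \<noteq> 0" using pp by simp
    have A: "1 - q = D / (of_nat p)^2" unfolding q_def D_def using pp2 by (simp add: diff_divide_distrib)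
    have B: "1 / (1 - q) = (of_nat p)^2 / D" unfolding A by simp
    have C: "(of_nat p)^2 = D + chi p" unfolding D_def by simp
    have "h * (1 / (1 - q)) + (1 - h) = h * ((D + chi p) / D) + (1 - h)" unfolding B C ..
    also have "(D + chi p) / D = 1 + chi p / D" using D0 by (simp add: add_divide_distrib)
    also have "h * (1 + chi p / D) + (1 - h) = 1 + h * chi p / D" by (simp add: algebra_simps)
    finally show ?thesis unfolding D_def .
  qed
  finally show ?thesis unfolding h_def .
qed


definition afac :: "(nat \<Rightarrow> complex) \<Rightarrow> nat \<Rightarrow> complex" where
  "afac chi p = 1 + ((chi p - 1) * of_nat p) / ((of_nat p ^ 2 - chi p) * (of_nat p - 1))"

definition ap :: "nat \<Rightarrow> complex" where
  "ap p = 1 - 1 / (of_nat p * (of_nat p - 1))"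

definition Rf :: "(nat \<Rightarrow> complex) \<Rightarrow> nat \<Rightarrow> complex" where
  "Rf chi p = (1 + (chi p - 1) / (of_nat p ^ 2 - chi p)) / afac chi p"

definition Ep :: "nat \<Rightarrow> (nat \<Rightarrow> complex) \<Rightarrow> nat \<Rightarrow> complex" where
  "Ep w chi p = 1 + of_real (if p dvd w then 1 else gg p) * chi p / ((of_nat p)^2 - chi p)"

definition cp :: "nat \<Rightarrow> complex" where
  "cp p = of_real (gg p) * (of_nat p - 1) / of_nat p"

lemma prime_coprime_iff: "prime (p::nat) \<Longrightarrow> coprime p n \<longleftrightarrow> \<not> p dvd n"
  by (metis coprime_absorb_left coprime_commute not_prime_unit prime_imp_coprime)

lemma gg_c: "complex_of_real (gg p) = ((of_nat p)^2 - 1) / ((of_nat p)^2 - of_nat p - 1)"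
  unfolding gg_def by simp

lemma den_c: "p \<ge> 2 \<Longrightarrow> (of_nat p :: complex)^2 - of_nat p - 1 \<noteq> 0"
proof
  assume p: "p \<ge> 2" and h: "(of_nat p :: complex)^2 - of_nat p - 1 = 0"
  have "(of_nat p :: complex)^2 - of_nat p - 1 = of_real ((real p)^2 - real p - 1)" by simp
  hence "(real p)^2 - real p - 1 = 0" using h by (metis of_real_eq_0_iff)
  thus False using den_pos[OF p] by simp
qed

lemma G0: fixes P :: complex assumes "P \<noteq> 0" "P - 1 \<noteq> 0"
  shows "1 - 1 / (P * (P - 1)) = (P^2 - P - 1) / (P * (P - 1))"
  using assms by (simp add: divide_simps) (simp add: algebra_simps power2_eq_square)
lemma G1: fixes P x :: complex assumes "P^2 - x \<noteq> 0" "P - 1 \<noteq> 0"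
  shows "1 + ((x - 1) * P) / ((P^2 - x) * (P - 1)) = (P^3 - P^2 - P + x) / ((P^2 - x) * (P - 1))"
  using assms by (simp add: divide_simps) (simp add: algebra_simps power2_eq_square power3_eq_cube)
lemma G2: fixes P :: complex assumes "P \<noteq> 0" "P - 1 \<noteq> 0" "P^2 - P - 1 \<noteq> 0"
  shows "(P^2 - P - 1) / (P * (P - 1)) * ((P^2 - 1) / (P^2 - P - 1) * (P - 1) / P) = 1 - 1 / P^2"
  using assms by (simp add: divide_simps) (simp add: algebra_simps power2_eq_square)
lemma G3: fixes P x :: complex assumes "P \<noteq> 0" "P - 1 \<noteq> 0" "P^2 - P - 1 \<noteq> 0" "P^2 - x \<noteq> 0"
  shows "(P^2 - P - 1) / (P * (P - 1)) * (1 + x / (P^2 - x)) * ((P^2 - 1) / (P^2 - P - 1) * (P - 1) / P) = 1 + (x - 1) / (P^2 - x)"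
  using assms by (simp add: divide_simps) (simp add: algebra_simps power2_eq_square)
lemma G4: fixes P x :: complex assumes "P \<noteq> 0" "P - 1 \<noteq> 0" "P^2 - P - 1 \<noteq> 0" "P^2 - x \<noteq> 0"
  shows "(P^2 - P - 1) / (P * (P - 1)) * (1 + (P^2 - 1) / (P^2 - P - 1) * x / (P^2 - x)) = (P^3 - P^2 - P + x) / ((P^2 - x) * (P - 1))"
  using assms by (simp add: divide_simps) (simp add: algebra_simps power2_eq_square power3_eq_cube)

lemma afac_eq:
  assumes "dirichlet_char d chi" "d \<ge> 1" "prime p"
  shows "afac chi p = ((of_nat p)^3 - (of_nat p)^2 - of_nat p + chi p) / (((of_nat p)^2 - chi p) * (of_nat p - 1))"
proof -
  have nz: "(of_nat p)^2 - chi p \<noteq> 0" by (rule p2_minus_chi_nz[OF assms])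
  have p1: "(of_nat p :: complex) - 1 \<noteq> 0" using prime_gt_1_nat[OF assms(3)] by simp
  show ?thesis unfolding afac_def by (rule G1[OF nz p1])
qed

lemma afac_nz:
  assumes "dirichlet_char d chi" "d \<ge> 1" "prime p"
  shows "afac chi p \<noteq> 0"
proof
  assume "afac chi p = 0"
  moreover have nz: "(of_nat p)^2 - chi p \<noteq> 0" by (rule p2_minus_chi_nz[OF assms])
  moreover have p1: "(of_nat p :: complex) - 1 \<noteq> 0" using prime_gt_1_nat[OF assms(3)] by simp
  ultimately have "(of_nat p)^3 - (of_nat p)^2 - of_nat p + chi p = 0"
    using afac_eq[OF assms] by simp
  hence "chi p = - of_real ((real p)^3 - (real p)^2 - real p)" by (simp add: algebra_simps)
  hence "norm (chi p) = \<bar>(real p)^3 - (real p)^2 - real p\<bar>" by (simp only: norm_minus_cancel norm_of_real)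
  moreover have "(real p)^3 - (real p)^2 - real p \<ge> 2"
  proof -
    have rp: "real p \<ge> 2" using prime_ge_2_nat[OF assms(3)] by simp
    have "(real p)^2 - real p - 1 \<ge> 1"
    proof -
      have "real p * (real p - 1) \<ge> 2 * 1" by (rule mult_mono) (use rp in auto)
      thus ?thesis by (simp add: power2_eq_square algebra_simps)
    qed
    hence "real p * ((real p)^2 - real p - 1) \<ge> 2 * 1" by (intro mult_mono) (use rp in auto)
    thus ?thesis by (simp add: power2_eq_square power3_eq_cube algebra_simps)
  qed
  ultimately show False using dc_norm_le[OF assms(1,2), of p] by simp
qed

lemma prime_identity:
  assumes chi: "dirichlet_char \<delta> chi" and d1: "\<delta> \<ge> 1" and p: "prime p"
  shows "ap p * Ep w chi p * (if p dvd w then cp p else 1) =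
    (if p dvd \<delta> \<and> \<not> p dvd w then ap p
     else if p dvd \<delta> \<and> p dvd w then 1 - 1 / (of_nat p)^2
     else if p dvd w then Rf chi p else 1) * (if chi p \<noteq> 0 then afac chi p else 1)"
proof -
  have x0: "chi p = 0 \<longleftrightarrow> p dvd \<delta>" using dc_zero_iff[OF chi] prime_coprime_iff[OF p] by simp
  have nz: "(of_nat p)^2 - chi p \<noteq> 0" by (rule p2_minus_chi_nz[OF chi d1 p])
  have p1: "(of_nat p :: complex) - 1 \<noteq> 0" using prime_gt_1_nat[OF p] by simp
  have p0: "(of_nat p :: complex) \<noteq> 0" using prime_gt_0_nat[OF p] by simp
  have dn: "(of_nat p :: complex)^2 - of_nat p - 1 \<noteq> 0" using den_c prime_ge_2_nat[OF p] by blast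
  have af: "afac chi p \<noteq> 0" by (rule afac_nz[OF chi d1 p])
  have ap_eq: "ap p = ((of_nat p)^2 - of_nat p - 1) / (of_nat p * (of_nat p - 1))"
    unfolding ap_def by (rule G0[OF p0 p1])
  show ?thesis
  proof (cases "p dvd \<delta>")
    case True
    hence c0: "chi p = 0" using x0 by simp
    have E1: "Ep w chi p = 1" unfolding Ep_def using c0 by simp
    show ?thesis
    proof (cases "p dvd w")
      case False
      then show ?thesis using True E1 c0 by simp
    next
      case w: True
      have "ap p * cp p = 1 - 1 / (of_nat p)^2"
        unfolding ap_eq cp_def gg_c by (rule G2[OF p0 p1 dn])
      then show ?thesis using True w E1 c0 by simp
    qed
  next
    case False
    hence c0: "chi p \<noteq> 0" using x0 by simp
    show ?thesis
    proof (cases "p dvd w")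
      case w: True
      have E: "Ep w chi p = 1 + chi p / ((of_nat p)^2 - chi p)" unfolding Ep_def using w by simp
      have "ap p * Ep w chi p * cp p = 1 + (chi p - 1) / (of_nat p ^ 2 - chi p)"
        unfolding E ap_eq cp_def gg_c by (rule G3[OF p0 p1 dn nz])
      also have "\<dots> = Rf chi p * afac chi p" unfolding Rf_def using af by simp
      finally show ?thesis using False w c0 by simp
    next
      case w: False
      have E: "Ep w chi p = 1 + of_real (gg p) * chi p / ((of_nat p)^2 - chi p)" unfolding Ep_def using w by simp
      have "ap p * Ep w chi p = afac chi p"
        unfolding E ap_eq gg_c afac_eq[OF chi d1 p] by (rule G4[OF p0 p1 dn nz])
      then show ?thesis using False w c0 by simp
    qed
  qed
qed


abbreviation PN :: "nat \<Rightarrow> nat set" where "PN N \<equiv> {p. prime p \<and> p \<le> N}"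

lemma finite_PN: "finite (PN N)" by simp

lemma prod_upto_filter:
  "(\<Prod>i\<le>N. if prime i then f i else 1) = (\<Prod>p\<in>PN N. f p)"
proof -
  have "(\<Prod>p\<in>{x\<in>{..N}. prime x}. f p) = (\<Prod>i\<le>N. if prime i then f i else 1)"
    by (rule prod.inter_filter) simp
  moreover have "{x\<in>{..N}. prime x} = PN N" by auto
  ultimately show ?thesis by simp
qed

lemma powr_m2: "n > 0 \<Longrightarrow> real n powr (-2) = 1 / (real n)^2"
  by (simp add: powr_minus powr_numeral divide_inverse)

lemma summable_powr_m2: "summable (\<lambda>n. c * real n powr (-2))"
  by (intro summable_mult) (simp add: summable_real_powr_iff)

lemma A_const_lim: "(\<lambda>N. \<Prod>p\<in>PN N. ap p) \<longlonglongrightarrow> complex_of_real A_const"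
proof -
  define fR where "fR n = (if prime n then 1 - 1 / (real n * (real n - 1)) else 1)" for n
  have bnd: "norm (fR n - 1) \<le> 2 * real n powr (-2)" for n
  proof (cases "prime n")
    case True
    have n2: "real n \<ge> 2" using prime_ge_2_nat[OF True] by simp
    have "real n * (real n - 1) \<ge> real n * (real n / 2)" using n2 by (intro mult_left_mono) auto
    hence h: "real n * (real n - 1) \<ge> (real n)^2 / 2" by (simp add: power2_eq_square)
    have pos: "(real n)^2 / 2 > 0" using n2 by simp
    have "norm (fR n - 1) = 1 / (real n * (real n - 1))" using True n2 unfolding fR_def by simp
    also have "\<dots> \<le> 1 / ((real n)^2 / 2)"
    proof (rule divide_left_mono)
      have "real n * (real n - 1) > 0" using n2 by simp
      thus "0 < real n * (real n - 1) * ((real n)^2 / 2)" using pos by simp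
    qed (use h in auto)
    also have "\<dots> = 2 * real n powr (-2)" using n2 powr_m2[of n] by simp
    finally show ?thesis .
  next
    case False
    then show ?thesis unfolding fR_def by simp
  qed
  have "summable (\<lambda>n. norm (fR n - 1))"
    by (rule summable_comparison_test'[OF summable_powr_m2[of 2]]) (use bnd in simp)
  hence cp: "convergent_prod fR"
    by (intro abs_convergent_prod_imp_convergent_prod summable_imp_abs_convergent_prod)
  have "(\<lambda>N. \<Prod>i\<le>N. fR i) \<longlonglongrightarrow> prodinf fR" by (rule convergent_prod_LIMSEQ[OF cp])
  moreover have "prodinf fR = A_const" unfolding A_const_def fR_def ..
  moreover have "(\<Prod>i\<le>N. fR i) = (\<Prod>p\<in>PN N. 1 - 1 / (real p * (real p - 1)))" for N
    unfolding fR_def by (rule prod_upto_filter)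
  ultimately have "(\<lambda>N. \<Prod>p\<in>PN N. 1 - 1 / (real p * (real p - 1))) \<longlonglongrightarrow> A_const" by simp
  hence "(\<lambda>N. complex_of_real (\<Prod>p\<in>PN N. 1 - 1 / (real p * (real p - 1)))) \<longlonglongrightarrow> complex_of_real A_const"
    by (rule tendsto_of_real)
  moreover have "complex_of_real (\<Prod>p\<in>PN N. 1 - 1 / (real p * (real p - 1))) = (\<Prod>p\<in>PN N. ap p)" for N
    unfolding ap_def by simp
  ultimately show ?thesis by simp
qed

lemma afac_bound:
  assumes chi: "dirichlet_char d chi" and d1: "d \<ge> 1" and p: "prime p"
  shows "norm (afac chi p - 1) \<le> 8 * real p powr (-2)"
proof -
  define y where "y = real p"
  have y2: "y \<ge> 2" unfolding y_def using prime_ge_2_nat[OF p] by simp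
  have nx: "norm (chi p) \<le> 1" by (rule dc_norm_le[OF chi d1])
  have num: "norm ((chi p - 1) * of_nat p) \<le> 2 * y"
  proof -
    have "norm (chi p - 1) \<le> norm (chi p) + norm (1::complex)" by (rule norm_triangle_ineq4)
    hence "norm (chi p - 1) \<le> 2" using nx by simp
    thus ?thesis unfolding y_def by (simp add: norm_mult mult_right_mono)
  qed
  have den: "norm ((of_nat p ^ 2 - chi p) * (of_nat p - 1)) \<ge> (y^2 - 1) * (y - 1)"
  proof -
    have "norm ((of_nat p :: complex) ^ 2) - norm (chi p) \<le> norm (of_nat p ^ 2 - chi p)"
      by (rule norm_triangle_ineq2)
    hence a: "y^2 - 1 \<le> norm (of_nat p ^ 2 - chi p)" using nx unfolding y_def by (simp add: norm_power)
    have b: "norm ((of_nat p :: complex) - 1) = y - 1" unfolding y_def using y2 y_def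
      by (metis norm_of_nat of_nat_1 of_nat_diff prime_ge_1_nat p of_real_of_nat_eq norm_of_real abs_of_nonneg diff_ge_0_iff_ge of_nat_1 of_nat_le_iff)
    have "(y^2 - 1) * (y - 1) \<le> norm (of_nat p ^ 2 - chi p) * (y - 1)"
      using a y2 by (intro mult_right_mono) auto
    thus ?thesis using b by (simp add: norm_mult)
  qed
  have dpos: "(y^2 - 1) * (y - 1) > 0"
  proof -
    have "y * y \<ge> 2 * 2" using y2 by (intro mult_mono) auto
    hence "y^2 - 1 > 0" by (simp add: power2_eq_square)
    moreover have "y - 1 > 0" using y2 by simp
    ultimately show ?thesis by simp
  qed
  have "norm (afac chi p - 1) = norm ((chi p - 1) * of_nat p) / norm ((of_nat p ^ 2 - chi p) * (of_nat p - 1))"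
    unfolding afac_def by (simp add: norm_divide)
  also have "\<dots> \<le> 2 * y / ((y^2 - 1) * (y - 1))"
    using num den dpos y2 by (intro frac_le) auto
  also have "\<dots> \<le> 8 / y^2"
  proof -
    have "y^2 * (3 * y - 4) \<ge> y^2 * 2" using y2 by (intro mult_left_mono) auto
    moreover have "(y - 1)^2 \<ge> 0" by simp
    ultimately have "2 * y * y^2 \<le> 8 * ((y^2 - 1) * (y - 1))"
      by (simp add: algebra_simps power2_eq_square power3_eq_cube)
    thus ?thesis using dpos y2 by (simp add: divide_simps)
  qed
  also have "\<dots> = 8 * real p powr (-2)" unfolding y_def using powr_m2[of p] prime_gt_0_nat[OF p] by simp
  finally show ?thesis .
qed

lemma A_chi_lim:
  assumes chi: "dirichlet_char d chi" and d1: "d \<ge> 1"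
  shows "(\<lambda>N. \<Prod>p\<in>PN N. (if chi p \<noteq> 0 then afac chi p else 1)) \<longlonglongrightarrow> A_chi chi"
proof -
  define fC where "fC n = (if prime n \<and> chi n \<noteq> 0 then afac chi n else 1)" for n
  have bnd: "norm (fC n - 1) \<le> 8 * real n powr (-2)" for n
    unfolding fC_def using afac_bound[OF chi d1, of n] by auto
  have "summable (\<lambda>n. norm (fC n - 1))"
    by (rule summable_comparison_test'[OF summable_powr_m2[of 8]]) (use bnd in simp)
  hence cp: "convergent_prod fC"
    by (intro abs_convergent_prod_imp_convergent_prod summable_imp_abs_convergent_prod)
  have "(\<lambda>N. \<Prod>i\<le>N. fC i) \<longlonglongrightarrow> prodinf fC" by (rule convergent_prod_LIMSEQ[OF cp])
  moreover have "prodinf fC = A_chi chi" unfolding A_chi_def fC_def afac_def ..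
  moreover have "(\<Prod>i\<le>N. fC i) = (\<Prod>p\<in>PN N. (if chi p \<noteq> 0 then afac chi p else 1))" for N
  proof -
    have "(\<Prod>i\<le>N. fC i) = (\<Prod>i\<le>N. if prime i then (if chi i \<noteq> 0 then afac chi i else 1) else 1)"
      unfolding fC_def by (intro prod.cong) auto
    thus ?thesis by (simp only: prod_upto_filter)
  qed
  ultimately show ?thesis by simp
qed

lemma Ep_lim:
  assumes chi: "dirichlet_char d chi" and d1: "d \<ge> 1" and w: "w > 0"
  shows "(\<lambda>N. \<Prod>p\<in>PN N. Ep w chi p) \<longlonglongrightarrow> infsum (Fc w chi) UNIV"
proof -
  have "(\<lambda>N. \<Prod>p\<in>PN N. infsum (\<lambda>k. Fc w chi (p ^ k)) UNIV) \<longlonglongrightarrow> infsum (Fc w chi) UNIV"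
    by (rule euler_limit[OF Fc_1[OF chi] Fc_mult[OF chi] Fc_abs[OF chi d1] Fc_0])
  moreover have "(\<Prod>p\<in>PN N. infsum (\<lambda>k. Fc w chi (p ^ k)) UNIV) = (\<Prod>p\<in>PN N. Ep w chi p)" for N
    unfolding Ep_def using euler_factor[OF chi d1 _ w] by (intro prod.cong) auto
  ultimately show ?thesis by simp
qed


lemma partial_identity:
  fixes w \<delta> N :: nat
  assumes chi: "dirichlet_char \<delta> chi" and d1: "\<delta> \<ge> 1" and w: "w \<ge> 1" and N: "w \<le> N" "\<delta> \<le> N"
  shows "(\<Prod>p\<in>PN N. ap p) * (\<Prod>p\<in>PN N. Ep w chi p) * (\<Prod>p\<in>prime_factors w. cp p) =
    ((\<Prod>p\<in>{p. prime p \<and> p dvd \<delta> \<and> \<not> p dvd w}. ap p) *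
     (\<Prod>p\<in>{p. prime p \<and> p dvd \<delta> \<and> p dvd w}. 1 - 1 / (of_nat p)^2) *
     (\<Prod>p\<in>{p. prime p \<and> p dvd w \<and> \<not> p dvd \<delta>}. Rf chi p)) *
    (\<Prod>p\<in>PN N. (if chi p \<noteq> 0 then afac chi p else 1))"
proof -
  define D where "D p = (if p dvd \<delta> \<and> \<not> p dvd w then ap p
     else if p dvd \<delta> \<and> p dvd w then 1 - 1 / (of_nat p)^2
     else if p dvd w then Rf chi p else 1)" for p
  define S1 where "S1 = {p. prime p \<and> p dvd \<delta> \<and> \<not> p dvd w}"
  define S2 where "S2 = {p. prime p \<and> p dvd \<delta> \<and> p dvd w}"
  define S3 where "S3 = {p. prime p \<and> p dvd w \<and> \<not> p dvd \<delta>}"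
  have ledelta: "p \<le> N" if "p dvd \<delta>" for p using dvd_imp_le[OF that] d1 N by simp
  have lew: "p \<le> N" if "p dvd w" for p using dvd_imp_le[OF that] w N by simp
  have sub1: "S1 \<subseteq> PN N" unfolding S1_def using ledelta by auto
  have sub2: "S2 \<subseteq> PN N" unfolding S2_def using ledelta by auto
  have sub3: "S3 \<subseteq> PN N" unfolding S3_def using lew by auto
  have fin1: "finite S1" using finite_subset[OF sub1 finite_PN] .
  have fin2: "finite S2" using finite_subset[OF sub2 finite_PN] .
  have fin3: "finite S3" using finite_subset[OF sub3 finite_PN] .
  have c1: "(\<Prod>p\<in>prime_factors w. cp p) = (\<Prod>p\<in>PN N. if p dvd w then cp p else 1)"
  proof -
    have "(\<Prod>p\<in>{x\<in>PN N. x dvd w}. cp p) = (\<Prod>p\<in>PN N. if p dvd w then cp p else 1)"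
      by (rule prod.inter_filter[OF finite_PN])
    moreover have "{x\<in>PN N. x dvd w} = prime_factors w"
      using w lew by (auto simp: in_prime_factors_iff)
    ultimately show ?thesis by simp
  qed
  have "(\<Prod>p\<in>PN N. ap p) * (\<Prod>p\<in>PN N. Ep w chi p) * (\<Prod>p\<in>prime_factors w. cp p) =
        (\<Prod>p\<in>PN N. ap p * Ep w chi p * (if p dvd w then cp p else 1))"
    unfolding c1 by (simp add: prod.distrib)
  also have "\<dots> = (\<Prod>p\<in>PN N. D p * (if chi p \<noteq> 0 then afac chi p else 1))"
    unfolding D_def by (intro prod.cong refl) (use prime_identity[OF chi d1] in auto)
  also have "\<dots> = (\<Prod>p\<in>PN N. D p) * (\<Prod>p\<in>PN N. (if chi p \<noteq> 0 then afac chi p else 1))"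
    by (rule prod.distrib)
  also have "(\<Prod>p\<in>PN N. D p) = (\<Prod>p\<in>S1 \<union> S2 \<union> S3. D p)"
  proof (rule prod.mono_neutral_right[OF finite_PN])
    show "S1 \<union> S2 \<union> S3 \<subseteq> PN N" using sub1 sub2 sub3 by blast
    show "\<forall>i\<in>PN N - (S1 \<union> S2 \<union> S3). D i = 1"
    proof
      fix i assume i: "i \<in> PN N - (S1 \<union> S2 \<union> S3)"
      hence ip: "prime i" by simp
      have n1: "\<not> (i dvd \<delta> \<and> \<not> i dvd w)" using i ip unfolding S1_def by blast
      have n2: "\<not> (i dvd \<delta> \<and> i dvd w)" using i ip unfolding S2_def by blast
      have n3: "\<not> (i dvd w \<and> \<not> i dvd \<delta>)" using i ip unfolding S3_def by blast
      show "D i = 1" unfolding D_def using n1 n2 n3 by presburger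
    qed
  qed
  also have "\<dots> = (\<Prod>p\<in>S1. D p) * (\<Prod>p\<in>S2. D p) * (\<Prod>p\<in>S3. D p)"
  proof -
    have dj1: "S1 \<inter> S2 = {}" unfolding S1_def S2_def by blast
    have dj2: "(S1 \<union> S2) \<inter> S3 = {}" unfolding S1_def S2_def S3_def by blast
    have f12: "finite (S1 \<union> S2)" using fin1 fin2 by blast
    have "(\<Prod>p\<in>S1 \<union> S2 \<union> S3. D p) = (\<Prod>p\<in>S1 \<union> S2. D p) * (\<Prod>p\<in>S3. D p)"
      by (rule prod.union_disjoint[OF f12 fin3 dj2])
    moreover have "(\<Prod>p\<in>S1 \<union> S2. D p) = (\<Prod>p\<in>S1. D p) * (\<Prod>p\<in>S2. D p)"
      by (rule prod.union_disjoint[OF fin1 fin2 dj1])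
    ultimately show ?thesis by simp
  qed
  also have "(\<Prod>p\<in>S1. D p) = (\<Prod>p\<in>S1. ap p)"
    by (rule prod.cong[OF refl]) (simp add: D_def S1_def)
  also have "(\<Prod>p\<in>S2. D p) = (\<Prod>p\<in>S2. 1 - 1 / (of_nat p)^2)"
    by (rule prod.cong[OF refl]) (simp add: D_def S2_def)
  also have "(\<Prod>p\<in>S3. D p) = (\<Prod>p\<in>S3. Rf chi p)"
    by (rule prod.cong[OF refl]) (simp add: D_def S3_def)
  finally show ?thesis unfolding S1_def S2_def S3_def .
qed

lemma key_chi:
  fixes w \<delta> :: nat
  assumes chi: "dirichlet_char \<delta> chi" and d1: "\<delta> \<ge> 1" and w: "w \<ge> 1"
  shows "complex_of_real A_const * infsum (Fc w chi) UNIV * (\<Prod>p\<in>prime_factors w. cp p) =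
    ((\<Prod>p\<in>{p. prime p \<and> p dvd \<delta> \<and> \<not> p dvd w}. ap p) *
     (\<Prod>p\<in>{p. prime p \<and> p dvd \<delta> \<and> p dvd w}. 1 - 1 / (of_nat p)^2) *
     (\<Prod>p\<in>{p. prime p \<and> p dvd w \<and> \<not> p dvd \<delta>}. Rf chi p)) * A_chi chi"
    (is "?L = ?C * _")
proof -
  have w0: "w > 0" using w by simp
  have l1: "(\<lambda>N. (\<Prod>p\<in>PN N. ap p) * (\<Prod>p\<in>PN N. Ep w chi p) * (\<Prod>p\<in>prime_factors w. cp p)) \<longlonglongrightarrow> ?L"
    by (intro tendsto_mult A_const_lim Ep_lim[OF chi d1 w0] tendsto_const)
  have l2: "(\<lambda>N. ?C * (\<Prod>p\<in>PN N. (if chi p \<noteq> 0 then afac chi p else 1))) \<longlonglongrightarrow> ?C * A_chi chi"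
    by (intro tendsto_mult tendsto_const A_chi_lim[OF chi d1])
  have ev: "eventually (\<lambda>N. ?C * (\<Prod>p\<in>PN N. (if chi p \<noteq> 0 then afac chi p else 1)) =
      (\<Prod>p\<in>PN N. ap p) * (\<Prod>p\<in>PN N. Ep w chi p) * (\<Prod>p\<in>prime_factors w. cp p)) sequentially"
  proof (rule eventually_sequentiallyI[of "max w \<delta>"])
    fix N assume "max w \<delta> \<le> N"
    thus "?C * (\<Prod>p\<in>PN N. (if chi p \<noteq> 0 then afac chi p else 1)) =
      (\<Prod>p\<in>PN N. ap p) * (\<Prod>p\<in>PN N. Ep w chi p) * (\<Prod>p\<in>prime_factors w. cp p)"
      using partial_identity[OF chi d1 w, of N] by simp
  qed
  have "(\<lambda>N. (\<Prod>p\<in>PN N. ap p) * (\<Prod>p\<in>PN N. Ep w chi p) * (\<Prod>p\<in>prime_factors w. cp p)) \<longlonglongrightarrow> ?C * A_chi chi"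
    by (rule Lim_transform_eventually[OF l2 ev])
  from LIMSEQ_unique[OF l1 this] show ?thesis .
qed

lemma cp_prod:
  assumes "w > 0"
  shows "(\<Prod>p\<in>prime_factors w. cp p) = of_real (fw w) * of_nat (totient w) / of_nat w"
proof -
  have "(\<Prod>p\<in>prime_factors w. cp p) = (\<Prod>p\<in>prime_factors w. of_real (gg p) * of_real (1 - 1 / real p))"
  proof (intro prod.cong refl)
    fix p assume "p \<in> prime_factors w"
    hence "p > 0" using prime_gt_0_nat in_prime_factors_imp_prime by blast
    thus "cp p = of_real (gg p) * of_real (1 - 1 / real p)" unfolding cp_def by (simp add: field_simps)
  qed
  also have "\<dots> = of_real (fw w) * of_real (\<Prod>p\<in>prime_factors w. 1 - 1 / real p)"
    unfolding fw_def by (simp add: prod.distrib)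
  also have "(\<Prod>p\<in>prime_factors w. 1 - 1 / real p) = real (totient w) / real w"
    using totient_formula2[of w] assms by simp
  finally show ?thesis by simp
qed


lemma r_w_pointwise:
  assumes w: "w > 0"
  shows "of_real (r_fun (w * n)) * chi n = of_real (fw w) / (of_nat w)^2 * Fc w chi n"
proof (cases "n = 0")
  case True
  then show ?thesis by (simp add: r_fun_eq Fc_def)
next
  case False
  hence n: "n > 0" by simp
  have "r_fun (w * n) = fw w * Hw w n / ((real w)^2 * (real n)^2)"
    unfolding r_fun_eq using fw_mult_w[OF w n] by (simp add: power_mult_distrib)
  hence "(of_real (r_fun (w * n)) :: complex) = of_real (fw w) * of_real (Hw w n) / ((of_nat w)^2 * (of_nat n)^2)"
    by simp
  thus ?thesis unfolding Fc_def using w n by (simp add: divide_simps)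
qed

lemma sum_reduction:
  fixes a d w \<alpha> \<delta> :: nat
  assumes w: "w > 0" and d1: "\<delta> \<ge> 1" and cop: "coprime \<alpha> \<delta>"
    and a_eq: "a = w * \<alpha>" and d_eq: "d = w * \<delta>"
  shows "complex_of_real (infsum r_fun {t. t \<ge> 1 \<and> [t = a] (mod d)}) =
    (\<Sum>chi\<in>{chi. dirichlet_char \<delta> chi}. cnj (chi \<alpha>) / of_nat (totient \<delta>) *
        (of_real (fw w) / (of_nat w)^2 * infsum (Fc w chi) UNIV))"
proof -
  define X where "X = {chi. dirichlet_char \<delta> chi}"
  have finX: "finite X" unfolding X_def by (rule finite_chars[OF d1])
  define S' where "S' = {n. n \<ge> 1 \<and> [n = \<alpha>] (mod \<delta>)}"
  have congiff: "[w * n = a] (mod d) \<longleftrightarrow> [n = \<alpha>] (mod \<delta>)" for n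
  proof -
    have "[w * n = a] (mod d) \<longleftrightarrow> w * (n mod \<delta>) = w * (\<alpha> mod \<delta>)"
      unfolding cong_def a_eq d_eq by (simp only: mod_mult_mult1)
    also have "\<dots> \<longleftrightarrow> [n = \<alpha>] (mod \<delta>)" using w unfolding cong_def by simp
    finally show ?thesis .
  qed
  have img: "{t. t \<ge> 1 \<and> [t = a] (mod d)} = (\<lambda>n. w * n) ` S'"
  proof
    show "(\<lambda>n. w * n) ` S' \<subseteq> {t. t \<ge> 1 \<and> [t = a] (mod d)}"
    proof
      fix t assume "t \<in> (\<lambda>n. w * n) ` S'"
      then obtain n where n: "n \<in> S'" "t = w * n" by blast
      have "t \<ge> 1" using n w unfolding S'_def by simp
      moreover have "[t = a] (mod d)" using n congiff unfolding S'_def by simp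
      ultimately show "t \<in> {t. t \<ge> 1 \<and> [t = a] (mod d)}" by simp
    qed
  next
    show "{t. t \<ge> 1 \<and> [t = a] (mod d)} \<subseteq> (\<lambda>n. w * n) ` S'"
    proof
      fix t assume "t \<in> {t. t \<ge> 1 \<and> [t = a] (mod d)}"
      hence t: "t \<ge> 1" "[t = a] (mod d)" by auto
      have "[t = a] (mod w)" using t(2) d_eq by (metis cong_modulus_mult_nat)
      hence "w dvd t \<longleftrightarrow> w dvd a" by (rule cong_dvd_iff)
      hence "w dvd t" using a_eq by simp
      then obtain n where n: "t = w * n" by blast
      have "n \<ge> 1" using n t(1) by (cases n) auto
      moreover have "[n = \<alpha>] (mod \<delta>)" using congiff t(2) n by simp
      ultimately show "t \<in> (\<lambda>n. w * n) ` S'" using n unfolding S'_def by blast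
    qed
  qed
  have inj: "inj_on (\<lambda>n. w * n) S'" using w by (intro inj_onI) simp
  have r1: "infsum r_fun {t. t \<ge> 1 \<and> [t = a] (mod d)} = infsum (\<lambda>n. r_fun (w * n)) S'"
    unfolding img using infsum_reindex[OF inj] by (simp add: o_def)
  have sum_rw: "(\<lambda>n. r_fun (w * n)) summable_on S'"
  proof -
    have "r_fun summable_on ((\<lambda>n. w * n) ` S')" by (rule r_fun_summable_on)
    hence "(r_fun \<circ> (\<lambda>n. w * n)) summable_on S'" using summable_on_reindex[OF inj] by blast
    thus ?thesis by (simp add: o_def)
  qed
  have r2: "infsum (\<lambda>n. complex_of_real (r_fun (w * n))) S' = of_real (infsum (\<lambda>n. r_fun (w * n)) S')"
    by (rule infsumI[OF has_sum_of_real[OF has_sum_infsum[OF sum_rw]]])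
  have phi0: "(of_nat (totient \<delta>) :: complex) \<noteq> 0" using d1 by simp
  define G where "G n = (\<Sum>chi\<in>X. cnj (chi \<alpha>) / of_nat (totient \<delta>) * (of_real (r_fun (w * n)) * chi n))" for n
  have G_eq: "G n = of_real (r_fun (w * n)) / of_nat (totient \<delta>) * (if [n = \<alpha>] (mod \<delta>) then of_nat (totient \<delta>) else 0)" for n
  proof -
    have "G n = (\<Sum>chi\<in>X. of_real (r_fun (w * n)) / of_nat (totient \<delta>) * (cnj (chi \<alpha>) * chi n))"
      unfolding G_def by (intro sum.cong refl) (simp add: mult_ac)
    also have "\<dots> = of_real (r_fun (w * n)) / of_nat (totient \<delta>) * (\<Sum>chi\<in>X. cnj (chi \<alpha>) * chi n)"
      by (simp add: sum_distrib_left)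
    also have "(\<Sum>chi\<in>X. cnj (chi \<alpha>) * chi n) = (if [n = \<alpha>] (mod \<delta>) then of_nat (totient \<delta>) else 0)"
      unfolding X_def by (rule orthogonality[OF d1 cop])
    finally show ?thesis .
  qed
  have r3: "infsum (\<lambda>n. complex_of_real (r_fun (w * n))) S' = infsum G UNIV"
  proof (rule infsum_cong_neutral)
    fix n assume n: "n \<in> UNIV - S'"
    show "G n = 0"
    proof (cases "n = 0")
      case True
      then show ?thesis using G_eq[of n] by (simp add: r_fun_eq)
    next
      case False
      hence "\<not> [n = \<alpha>] (mod \<delta>)" using n unfolding S'_def by simp
      then show ?thesis using G_eq[of n] by simp
    qed
  next
    fix n assume "n \<in> S' - UNIV" thus "complex_of_real (r_fun (w * n)) = 0" by simp
  next
    fix n assume n: "n \<in> S' \<inter> UNIV"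
    hence "[n = \<alpha>] (mod \<delta>)" unfolding S'_def by simp
    thus "complex_of_real (r_fun (w * n)) = G n" using G_eq[of n] phi0 by simp
  qed
  have summ: "(\<lambda>n. of_real (r_fun (w * n)) * chi n) summable_on UNIV" if "chi \<in> X" for chi
  proof -
    have dc: "dirichlet_char \<delta> chi" using that X_def by simp
    have "(\<lambda>n. of_real (fw w) / (of_nat w)^2 * Fc w chi n) summable_on UNIV"
      by (rule summable_on_cmult_right[OF Fc_summable[OF dc d1]])
    thus ?thesis using r_w_pointwise[OF w] by simp
  qed
  have r5: "infsum (\<lambda>n. of_real (r_fun (w * n)) * chi n) UNIV = of_real (fw w) / (of_nat w)^2 * infsum (Fc w chi) UNIV" for chi
    using r_w_pointwise[OF w] infsum_cmult_right'[of "of_real (fw w) / (of_nat w)^2" "Fc w chi" UNIV] by simp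
  have r4: "infsum G UNIV = (\<Sum>chi\<in>X. cnj (chi \<alpha>) / of_nat (totient \<delta>) * infsum (\<lambda>n. of_real (r_fun (w * n)) * chi n) UNIV)"
  proof (rule infsumI)
    show "(G has_sum (\<Sum>chi\<in>X. cnj (chi \<alpha>) / of_nat (totient \<delta>) * infsum (\<lambda>n. of_real (r_fun (w * n)) * chi n) UNIV)) UNIV"
      unfolding G_def
      by (rule has_sum_finite_sum[OF finX]) (intro has_sum_cmult_right has_sum_infsum summ)
  qed
  have "complex_of_real (infsum r_fun {t. t \<ge> 1 \<and> [t = a] (mod d)}) = infsum G UNIV"
    using r1 r2 r3 by simp
  also have "\<dots> = (\<Sum>chi\<in>X. cnj (chi \<alpha>) / of_nat (totient \<delta>) *
        (of_real (fw w) / (of_nat w)^2 * infsum (Fc w chi) UNIV))"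
    unfolding r4 r5 ..
  finally show ?thesis unfolding X_def .
qed


theorem mainTheorem11:
  fixes a d :: nat
  assumes "a \<ge> 1" and "d \<ge> 1"
  defines "w \<equiv> gcd a d"
  defines "\<alpha> \<equiv> a div w"
  defines "\<delta> \<equiv> d div w"
  shows "complex_of_real (rho a d) =
      1 / (of_nat (totient \<delta>) * of_nat w * of_nat (totient w)) *
      (\<Prod>p\<in>{p. prime p \<and> p dvd \<delta> \<and> \<not> p dvd w}. 1 - 1 / (of_nat p * (of_nat p - 1))) *
      (\<Prod>p\<in>{p. prime p \<and> p dvd \<delta> \<and> p dvd w}. 1 - 1 / (of_nat p)^2) *
      (\<Sum>chi\<in>{chi. dirichlet_char \<delta> chi}. cnj (chi \<alpha>) * A_chi chi *
         (\<Prod>p\<in>{p. prime p \<and> p dvd w \<and> \<not> p dvd \<delta>}.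
            (1 + (chi p - 1) / (of_nat p ^ 2 - chi p)) /
            (1 + ((chi p - 1) * of_nat p) / ((of_nat p ^ 2 - chi p) * (of_nat p - 1)))))
    \<and> (coprime a d \<longrightarrow>
      complex_of_real (rho a d) =
      1 / of_nat (totient d) *
      (\<Prod>p\<in>{p. prime p \<and> p dvd d}. 1 - 1 / (of_nat p * (of_nat p - 1))) *
      (\<Sum>chi\<in>{chi. dirichlet_char d chi}. cnj (chi a) * A_chi chi))"
proof -
  have a0: "a > 0" and d0: "d > 0" using assms(1,2) by auto
  have w0: "w > 0" unfolding w_def using a0 by simp
  have w1: "w \<ge> 1" using w0 by simp
  have wa: "w dvd a" and wd: "w dvd d" unfolding w_def by auto
  have a_eq: "a = w * \<alpha>" unfolding \<alpha>_def using wa by simp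
  have d_eq: "d = w * \<delta>" unfolding \<delta>_def using wd by simp
  have d1: "\<delta> \<ge> 1" using d_eq d0 by (cases \<delta>) auto
  have cop: "coprime \<alpha> \<delta>" unfolding \<alpha>_def \<delta>_def w_def using div_gcd_coprime a0 by blast
  define X where "X = {chi. dirichlet_char \<delta> chi}"
  define S1 where "S1 = {p. prime p \<and> p dvd \<delta> \<and> \<not> p dvd w}"
  define S2 where "S2 = {p. prime p \<and> p dvd \<delta> \<and> p dvd w}"
  define S3 where "S3 = {p. prime p \<and> p dvd w \<and> \<not> p dvd \<delta>}"
  define C1 where "C1 = (\<Prod>p\<in>S1. ap p)"
  define C2 where "C2 = (\<Prod>p\<in>S2. 1 - 1 / (of_nat p :: complex)^2)"
  define C3 where "C3 chi = (\<Prod>p\<in>S3. Rf chi p)" for chi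
  define T where "T chi = infsum (Fc w chi) UNIV" for chi
  define pw where "pw = (of_nat (totient w) :: complex)"
  define pd where "pd = (of_nat (totient \<delta>) :: complex)"
  define W where "W = (of_nat w :: complex)"
  define FW where "FW = (of_real (fw w) :: complex)"
  define AA where "AA = (of_real A_const :: complex)"
  have pw0: "pw \<noteq> 0" unfolding pw_def using w0 by simp
  have W0: "W \<noteq> 0" unfolding W_def using w0 by simp
  have K: "(\<Prod>p\<in>prime_factors w. cp p) = FW * pw / W"
    unfolding FW_def pw_def W_def by (rule cp_prod[OF w0])
  have key: "AA * (FW / W^2 * T chi) = C1 * C2 * C3 chi * A_chi chi / (W * pw)" if "chi \<in> X" for chi
  proof -
    have dc: "dirichlet_char \<delta> chi" using that X_def by simp
    have "AA * T chi * (FW * pw / W) = C1 * C2 * C3 chi * A_chi chi"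
      using key_chi[OF dc d1 w1] K unfolding AA_def T_def C1_def C2_def C3_def S1_def S2_def S3_def
      by simp
    thus ?thesis using pw0 W0 by (simp add: field_simps power2_eq_square)
  qed
  have red: "complex_of_real (infsum r_fun {t. t \<ge> 1 \<and> [t = a] (mod d)}) =
    (\<Sum>chi\<in>X. cnj (chi \<alpha>) / pd * (FW / W^2 * T chi))"
    unfolding X_def pd_def FW_def W_def T_def by (rule sum_reduction[OF w0 d1 cop a_eq d_eq])
  have main: "complex_of_real (rho a d) =
      1 / (pd * W * pw) * C1 * C2 * (\<Sum>chi\<in>X. cnj (chi \<alpha>) * A_chi chi * C3 chi)"
  proof -
    have "complex_of_real (rho a d) = AA * (\<Sum>chi\<in>X. cnj (chi \<alpha>) / pd * (FW / W^2 * T chi))"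
      unfolding rho_def AA_def using red by simp
    also have "\<dots> = (\<Sum>chi\<in>X. cnj (chi \<alpha>) / pd * (AA * (FW / W^2 * T chi)))"
      by (simp add: sum_distrib_left mult_ac)
    also have "\<dots> = (\<Sum>chi\<in>X. cnj (chi \<alpha>) / pd * (C1 * C2 * C3 chi * A_chi chi / (W * pw)))"
      using key by (intro sum.cong refl) simp
    also have "\<dots> = (\<Sum>chi\<in>X. 1 / (pd * W * pw) * C1 * C2 * (cnj (chi \<alpha>) * A_chi chi * C3 chi))"
      by (intro sum.cong refl) (simp add: field_simps)
    also have "\<dots> = 1 / (pd * W * pw) * C1 * C2 * (\<Sum>chi\<in>X. cnj (chi \<alpha>) * A_chi chi * C3 chi)"
      by (simp add: sum_distrib_left)
    finally show ?thesis .
  qed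
  have first: "complex_of_real (rho a d) =
      1 / (of_nat (totient \<delta>) * of_nat w * of_nat (totient w)) *
      (\<Prod>p\<in>{p. prime p \<and> p dvd \<delta> \<and> \<not> p dvd w}. 1 - 1 / (of_nat p * (of_nat p - 1))) *
      (\<Prod>p\<in>{p. prime p \<and> p dvd \<delta> \<and> p dvd w}. 1 - 1 / (of_nat p)^2) *
      (\<Sum>chi\<in>{chi. dirichlet_char \<delta> chi}. cnj (chi \<alpha>) * A_chi chi *
         (\<Prod>p\<in>{p. prime p \<and> p dvd w \<and> \<not> p dvd \<delta>}.
            (1 + (chi p - 1) / (of_nat p ^ 2 - chi p)) /
            (1 + ((chi p - 1) * of_nat p) / ((of_nat p ^ 2 - chi p) * (of_nat p - 1)))))"
    using main unfolding pd_def W_def pw_def C1_def C2_def C3_def S1_def S2_def S3_def X_def ap_def Rf_def afac_def .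
  show ?thesis
  proof
    show "complex_of_real (rho a d) =
      1 / (of_nat (totient \<delta>) * of_nat w * of_nat (totient w)) *
      (\<Prod>p\<in>{p. prime p \<and> p dvd \<delta> \<and> \<not> p dvd w}. 1 - 1 / (of_nat p * (of_nat p - 1))) *
      (\<Prod>p\<in>{p. prime p \<and> p dvd \<delta> \<and> p dvd w}. 1 - 1 / (of_nat p)^2) *
      (\<Sum>chi\<in>{chi. dirichlet_char \<delta> chi}. cnj (chi \<alpha>) * A_chi chi *
         (\<Prod>p\<in>{p. prime p \<and> p dvd w \<and> \<not> p dvd \<delta>}.
            (1 + (chi p - 1) / (of_nat p ^ 2 - chi p)) /
            (1 + ((chi p - 1) * of_nat p) / ((of_nat p ^ 2 - chi p) * (of_nat p - 1)))))"
      by (rule first)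
  next
    show "coprime a d \<longrightarrow>
      complex_of_real (rho a d) =
      1 / of_nat (totient d) *
      (\<Prod>p\<in>{p. prime p \<and> p dvd d}. 1 - 1 / (of_nat p * (of_nat p - 1))) *
      (\<Sum>chi\<in>{chi. dirichlet_char d chi}. cnj (chi a) * A_chi chi)"
    proof
      assume cad: "coprime a d"
      have w_1: "w = 1" unfolding w_def using cad by simp
      have al: "\<alpha> = a" unfolding \<alpha>_def w_1 by simp
      have de: "\<delta> = d" unfolding \<delta>_def w_1 by simp
      have e1: "{p. prime p \<and> p dvd d \<and> \<not> p dvd (1::nat)} = {p. prime p \<and> p dvd d}" by auto
      have e2: "{p. prime p \<and> p dvd d \<and> p dvd (1::nat)} = {}" by auto
      have e3: "{p. prime p \<and> p dvd (1::nat) \<and> \<not> p dvd d} = {}" by auto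
      show "complex_of_real (rho a d) =
        1 / of_nat (totient d) *
        (\<Prod>p\<in>{p. prime p \<and> p dvd d}. 1 - 1 / (of_nat p * (of_nat p - 1))) *
        (\<Sum>chi\<in>{chi. dirichlet_char d chi}. cnj (chi a) * A_chi chi)"
        using first unfolding w_1 al de e1 e2 e3 by simp
    qed
  qed
qed


end
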